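(* Let $H$ be a Kekul\'ean hexagonal system. Let $\mathbb{C}$ be the set of all Clar covers of $H$, ordered by $C\le C'$ iff $f(C)\subseteq f(C')$, and let $\mathbb{Q}$ be the set of all induced subgraphs of $R(H)$ that are isomorphic to some hypercube $Q_n$ ($n\ge0$), ordered by $Q\le Q'$ iff $Q$ is a subgraph of $Q'$. Then $(\mathbb{C},\le)$ and $(\mathbb{Q},\le)$ are isomorphic posets (via $f$).
   Context: A hexagonal system is a 2-connected finite plane graph in which every interior face is a regular hexagon of side length one; its hexagons are the boundaries of its interior faces; it is Kekul\'ean if it has a perfect matching. A Clar cover of $H$ is a spanning subgraph each of whose components is a hexagon of $H$ or a single edge. The resonance graph $R(H)$ has the perfect matchings of $H$ as vertices, two adjacent iff their symmetric difference is the edge set of a hexagon of $H$. For a Clar cover $C$, $f(C)$ denotes the subgraph of $R(H)$ induced by all perfect matchings $M$ of $H$ such that every hexagon component of $C$ is $M$-alternating and every single-edge component of $C$ belongs to $M$. *)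

theory Defs
  imports Main
begin

type_synonym vert = "int \<times> int"
type_synonym edge = "vert set"

text \<open>This is the honeycomb lattice (each vertex has degree 3,
bounded faces are hexagons), drawn as a brick wall.\<close>

definition lattice_edge :: "edge \<Rightarrow> bool" where
  "lattice_edge e \<longleftrightarrow> (\<exists>a b. e = {(a,b),(a+1,b)} \<or> (even (a+b) \<and> e = {(a,b),(a,b+1)}))"

text \<open>Hexagonal cells of the lattice are indexed by their lower-left corner (x,y), x+y even.\<close>

definition is_cell :: "vert \<Rightarrow> bool" where
  "is_cell c \<longleftrightarrow> even (fst c + snd c)"

fun cell_vertex :: "vert \<Rightarrow> nat \<Rightarrow> vert" where
  "cell_vertex (x,y) i =
     (if i mod 6 = 0 then (x,y) else if i mod 6 = 1 then (x+1,y) else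
      if i mod 6 = 2 then (x+2,y) else if i mod 6 = 3 then (x+2,y+1) else
      if i mod 6 = 4 then (x+1,y+1) else (x,y+1))"

definition cell_edge :: "vert \<Rightarrow> nat \<Rightarrow> edge" where
  "cell_edge c i = {cell_vertex c i, cell_vertex c (Suc i)}"

definition cell_edges :: "vert \<Rightarrow> edge set" where
  "cell_edges c = {cell_edge c i | i. i < 6}"

definition verts :: "edge set \<Rightarrow> vert set" where
  "verts E = \<Union>E"

definition adj :: "'a set set \<Rightarrow> 'a set \<Rightarrow> ('a \<times> 'a) set" where
  "adj F W = {(u,w). {u,w} \<in> F \<and> u \<in> W \<and> w \<in> W}"

definition connected_on :: "'a set \<Rightarrow> 'a set set \<Rightarrow> bool" where
  "connected_on W F \<longleftrightarrow> (\<forall>u\<in>W. \<forall>w\<in>W. (u,w) \<in> (adj F W)\<^sup>*)"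

definition two_connected :: "edge set \<Rightarrow> bool" where
  "two_connected E \<longleftrightarrow> card (verts E) \<ge> 3 \<and> connected_on (verts E) E \<and>
     (\<forall>v\<in>verts E. connected_on (verts E - {v}) {e\<in>E. v \<notin> e})"

text \<open>Hexagons of H: the lattice cells whose whole boundary lies in H (these are exactly the
boundaries of the interior faces which are hexagons).\<close>
definition hexes :: "edge set \<Rightarrow> vert set" where
  "hexes E = {c. is_cell c \<and> cell_edges c \<subseteq> E}"

text \<open>Two cells lie in the same face of H if they can be joined by crossing edges not in H.\<close>
definition cell_adj :: "edge set \<Rightarrow> (vert \<times> vert) set" where
  "cell_adj E = {(c,d). is_cell c \<and> is_cell d \<and> c \<noteq> d \<and>
                        (\<exists>e. e \<in> cell_edges c \<and> e \<in> cell_edges d \<and> e \<notin> E)}"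

text \<open>A hexagonal system: a finite 2-connected subgraph of the honeycomb lattice, every
interior (bounded) face of which is a single hexagonal cell.  The faces of H correspond to the
classes of cells under crossing non-edges of H; the bounded faces are the finite classes.  So
every cell not bounded entirely by H must lie in the unbounded (infinite) class.\<close>
definition hexagonal_system :: "edge set \<Rightarrow> bool" where
  "hexagonal_system E \<longleftrightarrow> finite E \<and> (\<forall>e\<in>E. lattice_edge e) \<and> two_connected E \<and>
     (\<forall>c. is_cell c \<and> \<not> cell_edges c \<subseteq> E \<longrightarrow> infinite {d. (c,d) \<in> (cell_adj E)\<^sup>*})"

definition perfect_matching :: "edge set \<Rightarrow> edge set \<Rightarrow> bool" where
  "perfect_matching E M \<longleftrightarrow> M \<subseteq> E \<and> (\<forall>v\<in>verts E. \<exists>!e. e \<in> M \<and> v \<in> e)"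

definition kekulean :: "edge set \<Rightarrow> bool" where
  "kekulean E \<longleftrightarrow> (\<exists>M. perfect_matching E M)"

definition alternating :: "edge set \<Rightarrow> vert \<Rightarrow> bool" where
  "alternating M c \<longleftrightarrow> (\<forall>i<6. cell_edge c i \<in> M \<longleftrightarrow> cell_edge c (Suc i) \<notin> M)"

type_synonym 'a graph = "'a set \<times> 'a set set"

definition resonance_graph :: "edge set \<Rightarrow> edge set graph" where
  "resonance_graph E =
    ({M. perfect_matching E M},
     {{M, M'} | M M'. perfect_matching E M \<and> perfect_matching E M' \<and>
                      (\<exists>c\<in>hexes E. M - M' \<union> (M' - M) = cell_edges c)})"

definition induced_subgraph :: "'a graph \<Rightarrow> 'a set \<Rightarrow> 'a graph" where
  "induced_subgraph G W = (W, {e \<in> snd G. e \<subseteq> W})"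

definition subgraph :: "'a graph \<Rightarrow> 'a graph \<Rightarrow> bool" where
  "subgraph G G' \<longleftrightarrow> fst G \<subseteq> fst G' \<and> snd G \<subseteq> snd G'"

definition graph_iso :: "'a graph \<Rightarrow> 'b graph \<Rightarrow> bool" where
  "graph_iso G G' \<longleftrightarrow> (\<exists>\<phi>. bij_betw \<phi> (fst G) (fst G') \<and>
     (\<forall>u\<in>fst G. \<forall>v\<in>fst G. {u,v} \<in> snd G \<longleftrightarrow> {\<phi> u, \<phi> v} \<in> snd G'))"

definition hypercube :: "nat \<Rightarrow> bool list graph" where
  "hypercube n = ({xs. length xs = n},
     {{xs, ys} | xs ys. length xs = n \<and> length ys = n \<and> card {i. i < n \<and> xs ! i \<noteq> ys ! i} = 1})"

definition comp :: "edge set \<Rightarrow> edge set \<Rightarrow> vert \<Rightarrow> vert set" where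
  "comp E F v = {w. (v,w) \<in> (adj F (verts E))\<^sup>*}"

definition comp_edges :: "edge set \<Rightarrow> edge set \<Rightarrow> vert \<Rightarrow> edge set" where
  "comp_edges E F v = {e \<in> F. e \<subseteq> comp E F v}"

text \<open>A Clar cover, represented by its edge set F (it is a spanning subgraph of H): every
component is a hexagon of H or a single edge.\<close>
definition clar_cover :: "edge set \<Rightarrow> edge set \<Rightarrow> bool" where
  "clar_cover E F \<longleftrightarrow> F \<subseteq> E \<and>
     (\<forall>v\<in>verts E. (\<exists>c\<in>hexes E. comp_edges E F v = cell_edges c) \<or> (\<exists>e. comp_edges E F v = {e}))"

definition hex_comps :: "edge set \<Rightarrow> edge set \<Rightarrow> vert set" where
  "hex_comps E F = {c\<in>hexes E. \<exists>v\<in>verts E. comp_edges E F v = cell_edges c}"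

definition edge_comps :: "edge set \<Rightarrow> edge set \<Rightarrow> edge set" where
  "edge_comps E F = {e. \<exists>v\<in>verts E. comp_edges E F v = {e}}"

definition fC :: "edge set \<Rightarrow> edge set \<Rightarrow> edge set graph" where
  "fC E F = induced_subgraph (resonance_graph E)
     {M. perfect_matching E M \<and> (\<forall>c\<in>hex_comps E F. alternating M c) \<and>
         (\<forall>e\<in>edge_comps E F. e \<in> M)}"

definition clar_le :: "edge set \<Rightarrow> edge set \<Rightarrow> edge set \<Rightarrow> bool" where
  "clar_le E F F' \<longleftrightarrow> subgraph (fC E F) (fC E F')"

definition hypercube_subgraphs :: "edge set \<Rightarrow> edge set graph set" where
  "hypercube_subgraphs E = {G. (\<exists>W \<subseteq> fst (resonance_graph E). G = induced_subgraph (resonance_graph E) W)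
                               \<and> (\<exists>n. graph_iso G (hypercube n))}"

end

theory Submission
  imports Defs
begin


definition hv :: "vert \<Rightarrow> vert set" where "hv c = {cell_vertex c i | i. i < 6}"
definition half :: "vert \<Rightarrow> bool \<Rightarrow> edge set" where
  "half c b = {cell_edge c i | i. i < 6 \<and> odd i = b}"

lemma less6: "(i::nat) < 6 \<Longrightarrow> i = 0 \<or> i = 1 \<or> i = 2 \<or> i = 3 \<or> i = 4 \<or> i = 5" by arith

lemma cv_mod: "cell_vertex c (i mod 6) = cell_vertex c i"
  by (cases c) simp

lemma ce_mod: "cell_edge c (i mod 6) = cell_edge c i"
  unfolding cell_edge_def using cv_mod
  by (metis mod_Suc_eq)

lemma cv_inj: "i < 6 \<Longrightarrow> k < 6 \<Longrightarrow> cell_vertex c i = cell_vertex c k \<longleftrightarrow> i = k"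
  by (cases c) (auto dest!: less6)

lemma cv_inj_mod: "cell_vertex c i = cell_vertex c k \<longleftrightarrow> i mod 6 = k mod 6"
  by (metis cv_inj cv_mod mod_less_divisor zero_less_numeral)

lemma ce_mem: "v \<in> cell_edge c i \<longleftrightarrow> v = cell_vertex c i \<or> v = cell_vertex c (Suc i)"
  by (auto simp: cell_edge_def)

lemma ce_inj_mod: "cell_edge c i = cell_edge c k \<longleftrightarrow> i mod 6 = k mod 6"
proof
  assume h: "cell_edge c i = cell_edge c k"
  have "cell_vertex c i \<in> cell_edge c k" using h ce_mem by metis
  hence 1: "i mod 6 = k mod 6 \<or> i mod 6 = Suc k mod 6" by (simp add: ce_mem cv_inj_mod)
  have "cell_vertex c (Suc i) \<in> cell_edge c k" using h ce_mem by metis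
  hence 2: "Suc i mod 6 = k mod 6 \<or> Suc i mod 6 = Suc k mod 6" by (simp add: ce_mem cv_inj_mod)
  from 1 2 show "i mod 6 = k mod 6" by (auto simp: mod_Suc split: if_splits)
next
  assume "i mod 6 = k mod 6" thus "cell_edge c i = cell_edge c k" by (metis ce_mod)
qed


lemma cell_edges_alt: "cell_edges c = {cell_edge c i | i. True}"
  unfolding cell_edges_def by (metis (no_types, opaque_lifting) ce_mod mod_less_divisor zero_less_numeral)

lemma card_cells: "card (cell_edges c) = 6"
proof -
  have "cell_edges c = (cell_edge c) ` {..<6}" by (auto simp: cell_edges_def)
  moreover have "inj_on (cell_edge c) {..<6}" by (auto simp: inj_on_def ce_inj_mod)
  ultimately show ?thesis by (simp add: card_image)
qed

lemma hv_union: "hv c = \<Union>(cell_edges c)"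
proof
  show "hv c \<subseteq> \<Union>(cell_edges c)" by (auto simp: hv_def cell_edges_def cell_edge_def)
  show "\<Union>(cell_edges c) \<subseteq> hv c"
    by (auto simp: hv_def cell_edges_def cell_edge_def) (metis cv_mod mod_less_divisor zero_less_numeral)
qed

lemma hv_box: "hv (x,y) = {(a,b). x \<le> a \<and> a \<le> x+2 \<and> y \<le> b \<and> b \<le> y+1}"
proof
  show "hv (x,y) \<subseteq> {(a,b). x \<le> a \<and> a \<le> x+2 \<and> y \<le> b \<and> b \<le> y+1}" unfolding hv_def apply clarify apply (drule less6) apply (elim disjE) apply simp_all done
  show "{(a,b). x \<le> a \<and> a \<le> x+2 \<and> y \<le> b \<and> b \<le> y+1} \<subseteq> hv (x,y)"
  proof clarify
    fix a b assume h: "x \<le> a" "a \<le> x+2" "y \<le> b" "b \<le> y+1"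
    have dd: "a = x \<or> a = x+1 \<or> a = x+2" "b = y \<or> b = y+1" using h by arith+
    show "(a,b) \<in> hv (x,y)" unfolding hv_def
      apply (rule CollectI, rule exI[of _ "if b = y then nat (a-x) else 5 - nat (a-x)"])
      using dd by (elim disjE; simp)
  qed
qed

lemma pig: "(l::int) \<le> u1 \<Longrightarrow> u1 \<le> l+1 \<Longrightarrow> l \<le> u2 \<Longrightarrow> u2 \<le> l+1 \<Longrightarrow> l \<le> u3 \<Longrightarrow> u3 \<le> l+1
   \<Longrightarrow> u1 \<noteq> u2 \<Longrightarrow> u1 \<noteq> u3 \<Longrightarrow> u2 \<noteq> u3 \<Longrightarrow> False" by arith

lemma box3:
  fixes x y x' y' a1 b1 a2 b2 a3 b3 :: int
  assumes "even (x+y)" "even (x'+y')"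
   "x \<le> a1" "a1 \<le> x+2" "y \<le> b1" "b1 \<le> y+1"
   "x \<le> a2" "a2 \<le> x+2" "y \<le> b2" "b2 \<le> y+1"
   "x \<le> a3" "a3 \<le> x+2" "y \<le> b3" "b3 \<le> y+1"
   "x' \<le> a1" "a1 \<le> x'+2" "y' \<le> b1" "b1 \<le> y'+1"
   "x' \<le> a2" "a2 \<le> x'+2" "y' \<le> b2" "b2 \<le> y'+1"
   "x' \<le> a3" "a3 \<le> x'+2" "y' \<le> b3" "b3 \<le> y'+1"
   "(a1,b1) \<noteq> (a2,b2)" "(a1,b1) \<noteq> (a3,b3)" "(a2,b2) \<noteq> (a3,b3)"
  shows "x = x' \<and> y = y'"
proof -
  have y: "y' = y - 1 \<or> y' = y \<or> y' = y+1" using assms by arith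
  have x: "x' = x - 2 \<or> x' = x - 1 \<or> x' = x \<or> x' = x+1 \<or> x' = x+2" using assms by arith
  have d: "a1 \<noteq> a2 \<or> b1 \<noteq> b2" "a1 \<noteq> a3 \<or> b1 \<noteq> b3" "a2 \<noteq> a3 \<or> b2 \<noteq> b3" using assms by auto
  show ?thesis
  proof (cases "y' = y")
    case True
    hence "even (x' - x)" using assms(1,2) by presburger
    hence "x' = x - 2 \<or> x' = x \<or> x' = x+2" using x by presburger
    moreover
    { assume "x' = x+2" hence "a1 = x+2" "a2 = x+2" "a3 = x+2" using assms by arith+
      hence False using pig[of y b1 b2 b3] d assms by auto }
    moreover
    { assume "x' = x-2" hence "a1 = x" "a2 = x" "a3 = x" using assms by arith+
      hence False using pig[of y b1 b2 b3] d assms by auto }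
    ultimately show ?thesis using True by auto
  next
    case False
    hence yy: "y' = y - 1 \<or> y' = y+1" using y by auto
    hence "odd (x' - x)" using assms(1,2) by presburger
    hence xx: "x' = x - 1 \<or> x' = x + 1" using x by presburger
    have bb: "b1 = b2 \<and> b1 = b3 \<and> b2 = b3" using yy assms by arith
    have "\<exists>l. l \<le> a1 \<and> a1 \<le> l+1 \<and> l \<le> a2 \<and> a2 \<le> l+1 \<and> l \<le> a3 \<and> a3 \<le> l+1"
    proof (cases "x' = x - 1")
      case True thus ?thesis using assms by (intro exI[of _ x]) arith
    next
      case False hence "x' = x+1" using xx by auto
      thus ?thesis using assms by (intro exI[of _ "x+1"]) arith
    qed
    then obtain l where "l \<le> a1 \<and> a1 \<le> l+1 \<and> l \<le> a2 \<and> a2 \<le> l+1 \<and> l \<le> a3 \<and> a3 \<le> l+1" by blast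
    hence False using pig[of l a1 a2 a3] d bb by auto
    thus ?thesis ..
  qed
qed

lemma three_pts:
  assumes "is_cell c" "is_cell d" "p \<in> hv c" "q \<in> hv c" "r \<in> hv c"
    "p \<in> hv d" "q \<in> hv d" "r \<in> hv d" "p \<noteq> q" "p \<noteq> r" "q \<noteq> r"
  shows "c = d"
proof -
  obtain x y where c: "c = (x,y)" by (cases c)
  obtain x' y' where d: "d = (x',y')" by (cases d)
  obtain a1 b1 where p: "p = (a1,b1)" by (cases p)
  obtain a2 b2 where q: "q = (a2,b2)" by (cases q)
  obtain a3 b3 where r: "r = (a3,b3)" by (cases r)
  show ?thesis using assms unfolding c d p q r hv_box is_cell_def
    using box3[of x y x' y' a1 b1 a2 b2 a3 b3] by auto
qed

lemma ce_sub_hv: "e \<in> cell_edges c \<Longrightarrow> e \<subseteq> hv c"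
  using hv_union by blast

lemma ce_two: "e \<in> cell_edges c \<Longrightarrow> \<exists>p q. e = {p,q} \<and> p \<noteq> q"
proof -
  assume "e \<in> cell_edges c"
  then obtain i where "e = cell_edge c i" unfolding cell_edges_def by blast
  moreover have "cell_vertex c i \<noteq> cell_vertex c (Suc i)" unfolding cv_inj_mod by (simp add: mod_Suc)
  ultimately show ?thesis unfolding cell_edge_def by blast
qed

lemma share2:
  assumes "is_cell c" "is_cell d" "e1 \<in> cell_edges c" "e1 \<in> cell_edges d"
    "e2 \<in> cell_edges c" "e2 \<in> cell_edges d" "e1 \<noteq> e2"
  shows "c = d"
proof -
  obtain p q where pq: "e1 = {p,q}" "p \<noteq> q" using ce_two assms(3) by blast
  obtain r s where rs: "e2 = {r,s}" "r \<noteq> s" using ce_two assms(5) by blast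
  have "r \<notin> e1 \<or> s \<notin> e1" using pq rs assms(7) by blast
  then obtain t where t: "t \<in> e2" "t \<notin> e1" using rs by blast
  have sc: "e1 \<subseteq> hv c" "e2 \<subseteq> hv c" "e1 \<subseteq> hv d" "e2 \<subseteq> hv d"
    using ce_sub_hv assms by blast+
  show ?thesis
    apply (rule three_pts[OF assms(1,2), of p q t])
    using sc pq t by auto
qed

lemma share_le1:
  assumes "is_cell c" "is_cell d" "c \<noteq> d"
  shows "card (cell_edges c \<inter> cell_edges d) \<le> 1"
proof -
  have f: "finite (cell_edges c)" using card_cells by (metis card.infinite zero_neq_numeral)
  have "\<forall>a\<in>cell_edges c \<inter> cell_edges d. \<forall>b\<in>cell_edges c \<inter> cell_edges d. a = b"
    using share2[OF assms(1,2)] assms(3) by blast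
  thus ?thesis using f card_le_Suc0_iff_eq[of "cell_edges c \<inter> cell_edges d"] by simp
qed

lemma cells_sub_eq:
  assumes "is_cell c" "is_cell d" "cell_edges c \<subseteq> cell_edges d"
  shows "c = d"
proof (rule ccontr)
  assume "c \<noteq> d"
  hence "card (cell_edges c \<inter> cell_edges d) \<le> 1" using share_le1 assms by blast
  moreover have "cell_edges c \<inter> cell_edges d = cell_edges c" using assms by blast
  ultimately show False using card_cells by simp
qed




definition sd :: "'a set \<Rightarrow> 'a set \<Rightarrow> 'a set" where "sd A B = (A - B) \<union> (B - A)"

lemma sd_comm: "sd A B = sd B A" by (auto simp: sd_def)

lemma res_edge: "{M, M'} \<in> snd (resonance_graph E) \<longleftrightarrow>
   perfect_matching E M \<and> perfect_matching E M' \<and> (\<exists>c\<in>hexes E. sd M M' = cell_edges c)"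
proof
  assume "{M, M'} \<in> snd (resonance_graph E)"
  then obtain A B where AB: "{M,M'} = {A,B}" "perfect_matching E A" "perfect_matching E B"
      "\<exists>c\<in>hexes E. A - B \<union> (B - A) = cell_edges c"
    unfolding resonance_graph_def by auto
  from AB(1) have "(M = A \<and> M' = B) \<or> (M = B \<and> M' = A)" by (auto simp: doubleton_eq_iff)
  thus "perfect_matching E M \<and> perfect_matching E M' \<and> (\<exists>c\<in>hexes E. sd M M' = cell_edges c)"
    using AB(2-4) by (auto simp: sd_def Un_commute)
next
  assume "perfect_matching E M \<and> perfect_matching E M' \<and> (\<exists>c\<in>hexes E. sd M M' = cell_edges c)"
  thus "{M, M'} \<in> snd (resonance_graph E)" unfolding resonance_graph_def sd_def by auto
qed

lemma pm_unique: "perfect_matching E M \<Longrightarrow> e \<in> M \<Longrightarrow> e' \<in> M \<Longrightarrow> v \<in> e \<Longrightarrow> v \<in> e' \<Longrightarrow> e = e'"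
  unfolding perfect_matching_def verts_def by blast

lemma pm_ex: "perfect_matching E M \<Longrightarrow> v \<in> verts E \<Longrightarrow> \<exists>e\<in>M. v \<in> e"
  unfolding perfect_matching_def by blast

lemma cells_in_E: "c \<in> hexes E \<Longrightarrow> cell_edges c \<subseteq> E"
  by (simp add: hexes_def)

lemma hexes_cell: "c \<in> hexes E \<Longrightarrow> is_cell c"
  by (simp add: hexes_def)

lemma hv_verts: "c \<in> hexes E \<Longrightarrow> hv c \<subseteq> verts E"
  using cells_in_E hv_union unfolding verts_def by blast

lemma ce_in_cells: "cell_edge c i \<in> cell_edges c"
  unfolding cell_edges_alt by blast

lemma cv_in_hv: "cell_vertex c i \<in> hv c"
  unfolding hv_def by (metis (mono_tags, lifting) CollectI cv_mod mod_less_divisor zero_less_numeral)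

lemma alt_vert:
  assumes pm: "perfect_matching E M" and alt: "alternating M c" and c: "c \<in> hexes E"
    and v: "v \<in> hv c" and e: "e \<in> M" "v \<in> e"
  shows "e \<in> cell_edges c"
proof -
  obtain k where k: "k < 6" "v = cell_vertex c k" using v unfolding hv_def by blast
  define i where "i = (k + 5) mod 6"
  have i6: "i < 6" unfolding i_def by simp
  have "Suc i mod 6 = k" using k(1) unfolding i_def by (auto dest!: less6)
  hence vS: "v = cell_vertex c (Suc i)" using k cv_mod by metis
  have va: "v \<in> cell_edge c i" "v \<in> cell_edge c (Suc i)" using vS by (auto simp: ce_mem)
  have "cell_edge c i \<in> M \<or> cell_edge c (Suc i) \<in> M" using alt i6 unfolding alternating_def by blast
  then obtain g where g: "g \<in> M" "v \<in> g" "g \<in> cell_edges c"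
    using va ce_in_cells by blast
  have "e = g" using pm_unique[OF pm e(1) g(1) e(2) g(2)] .
  thus ?thesis using g by simp
qed

lemma diff_alt:
  assumes pm: "perfect_matching E M" and pm': "perfect_matching E M'" and c: "c \<in> hexes E"
    and d: "sd M M' = cell_edges c"
  shows "alternating M c"
  unfolding alternating_def
proof (intro allI impI)
  fix i :: nat assume "i < 6"
  let ?a = "cell_edge c i" and ?b = "cell_edge c (Suc i)" and ?v = "cell_vertex c (Suc i)"
  have ab: "?a \<noteq> ?b" unfolding ce_inj_mod by (simp add: mod_Suc)
  have v: "?v \<in> ?a" "?v \<in> ?b" by (auto simp: ce_mem)
  have inc: "?a \<in> sd M M'" "?b \<in> sd M M'" using d ce_in_cells by blast+
  show "?a \<in> M \<longleftrightarrow> ?b \<notin> M"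
  proof
    assume "?a \<in> M" thus "?b \<notin> M" using pm_unique[OF pm, of ?a ?b ?v] v ab by blast
  next
    assume "?b \<notin> M"
    show "?a \<in> M"
    proof (rule ccontr)
      assume "?a \<notin> M"
      hence "?a \<in> M'" "?b \<in> M'" using inc \<open>?b \<notin> M\<close> unfolding sd_def by blast+
      thus False using pm_unique[OF pm', of ?a ?b ?v] v ab by blast
    qed
  qed
qed

lemma alt_formula:
  assumes "alternating M c"
  shows "cell_edge c i \<in> M \<longleftrightarrow> (odd (i mod 6) \<longleftrightarrow> cell_edge c 1 \<in> M)"
proof -
  have a: "\<And>j. j < 6 \<Longrightarrow> cell_edge c j \<in> M \<longleftrightarrow> cell_edge c (Suc j) \<notin> M"
    using assms unfolding alternating_def by blast
  have "cell_edge c (i mod 6) \<in> M \<longleftrightarrow> (odd (i mod 6) \<longleftrightarrow> cell_edge c 1 \<in> M)"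
  proof -
    have "i mod 6 < 6" by simp
    moreover have "cell_edge c 6 = cell_edge c 0" using ce_mod[of c 6] by simp
    ultimately show ?thesis using a[of 0] a[of 1] a[of 2] a[of 3] a[of 4] a[of 5]
      by (auto dest!: less6 simp del: mod_less_divisor)
  qed
  thus ?thesis by (simp add: ce_mod)
qed

lemma half_mem: "cell_edge c i \<in> half c b \<longleftrightarrow> (odd (i mod 6) = b)"
  unfolding half_def
  by (auto simp: ce_inj_mod) (metis mod_less_divisor mod_mod_trivial zero_less_numeral)

lemma half_sub: "half c b \<subseteq> cell_edges c"
  unfolding half_def cell_edges_def by blast

lemma cells_half: "e \<in> cell_edges c \<Longrightarrow> e \<in> half c b \<or> e \<in> half c (\<not> b)"
  unfolding cell_edges_def half_def by blast

lemma half_disj: "e \<in> half c b \<Longrightarrow> e \<in> half c b' \<Longrightarrow> b = b'"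
  unfolding half_def using half_mem unfolding half_def by blast

lemma half_pm:
  assumes "v \<in> hv c"
  shows "\<exists>!e. e \<in> half c b \<and> v \<in> e"
proof -
  obtain k where k: "k < 6" "v = cell_vertex c k" using assms unfolding hv_def by blast
  have mem: "\<And>i. v \<in> cell_edge c i \<longleftrightarrow> (i mod 6 = k \<or> Suc i mod 6 = k)"
    using k by (auto simp: ce_mem cv_inj_mod)
  define i where "i = (if odd k = b then k else (k + 5) mod 6)"
  have i: "i < 6" "odd i = b" "i mod 6 = k \<or> Suc i mod 6 = k" using k(1) unfolding i_def
    by (auto dest!: less6)
  have ex: "cell_edge c i \<in> half c b \<and> v \<in> cell_edge c i"
    using i by (simp add: half_mem mem)
  show ?thesis
  proof (rule ex1I[of "\<lambda>e. e \<in> half c b \<and> v \<in> e" "cell_edge c i"])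
    show "cell_edge c i \<in> half c b \<and> v \<in> cell_edge c i" by (rule ex)
  next
    fix e assume e: "e \<in> half c b \<and> v \<in> e"
    then obtain j where j: "j < 6" "odd j = b" "e = cell_edge c j" unfolding half_def by blast
    have "j mod 6 = k \<or> Suc j mod 6 = k" using e j mem by blast
    moreover have "Suc i mod 6 = (if i = 5 then 0 else Suc i)" "Suc j mod 6 = (if j = 5 then 0 else Suc j)"
      using i(1) j(1) by (auto simp: mod_Suc)
    moreover have "i mod 6 = i" "j mod 6 = j" using i(1) j(1) by auto
    ultimately have "j = i" using i j k(1) by (auto split: if_splits; presburger)
    thus "e = cell_edge c i" using j by simp
  qed
qed




definition wfE :: "edge set \<Rightarrow> bool" where "wfE E \<longleftrightarrow> finite E \<and> (\<forall>e\<in>E. lattice_edge e)"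
definition U :: "vert set \<Rightarrow> edge set" where "U HS = \<Union>(cell_edges ` HS)"
definition pdata :: "edge set \<Rightarrow> vert set \<Rightarrow> edge set \<Rightarrow> bool" where
  "pdata E HS EC \<longleftrightarrow> finite HS \<and> HS \<subseteq> hexes E \<and> (\<forall>c\<in>HS. \<forall>d\<in>HS. c \<noteq> d \<longrightarrow> hv c \<inter> hv d = {}) \<and>
     EC \<subseteq> E \<and> (\<forall>e\<in>EC. \<forall>e'\<in>EC. e \<noteq> e' \<longrightarrow> e \<inter> e' = {}) \<and> (\<forall>e\<in>EC. \<forall>c\<in>HS. e \<inter> hv c = {}) \<and>
     verts E \<subseteq> \<Union>(hv ` HS) \<union> \<Union>EC"
definition PP :: "edge set \<Rightarrow> vert set \<Rightarrow> edge set \<Rightarrow> edge set set" where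
  "PP E HS EC = {M. perfect_matching E M \<and> (\<forall>c\<in>HS. alternating M c) \<and> (\<forall>e\<in>EC. e \<in> M)}"

lemma lattice_two: "lattice_edge e \<Longrightarrow> \<exists>p q. e = {p,q} \<and> p \<noteq> q"
proof -
  assume "lattice_edge e"
  then obtain a b where h: "e = {(a,b),(a+1,b)} \<or> (even (a+b) \<and> e = {(a,b),(a,b+1)})" unfolding lattice_edge_def by blast
  show ?thesis
  proof (cases "e = {(a,b),(a+1,b)}")
    case True thus ?thesis by (intro exI[of _ "(a,b)"] exI[of _ "(a+1,b)"]) simp
  next
    case False hence "e = {(a,b),(a,b+1)}" using h by blast
    thus ?thesis by (intro exI[of _ "(a,b)"] exI[of _ "(a,b+1)"]) simp
  qed
qed

lemma lat_other: "lattice_edge e \<Longrightarrow> v \<in> e \<Longrightarrow> \<exists>w. e = {v,w}"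
proof -
  assume "lattice_edge e" "v \<in> e"
  moreover obtain p q where "e = {p,q}" using lattice_two[OF \<open>lattice_edge e\<close>] by blast
  ultimately show ?thesis by blast
qed

lemma lat_ne: "lattice_edge e \<Longrightarrow> \<exists>v. v \<in> e"
proof -
  assume "lattice_edge e"
  then obtain p q where "e = {p,q}" using lattice_two by blast
  thus ?thesis by blast
qed

lemma ce_ne: "e \<in> cell_edges c \<Longrightarrow> \<exists>v. v \<in> e"
proof -
  assume "e \<in> cell_edges c"
  then obtain p q where "e = {p,q}" using ce_two by blast
  thus ?thesis by blast
qed

lemma adj_sym: "sym (adj F W)"
  unfolding sym_def
proof (intro allI impI)
  fix x y assume "(x,y) \<in> adj F W"
  thus "(y,x) \<in> adj F W" unfolding adj_def by (simp add: insert_commute)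
qed

lemma adjI: "{u,w} \<in> F \<Longrightarrow> u \<in> W \<Longrightarrow> w \<in> W \<Longrightarrow> (u,w) \<in> adj F W"
  unfolding adj_def by auto

lemma verts_I: "e \<in> E \<Longrightarrow> v \<in> e \<Longrightarrow> v \<in> verts E"
  unfolding verts_def by blast

lemma comp_closed:
  assumes "v \<in> K" "\<And>w w'. w \<in> K \<Longrightarrow> {w,w'} \<in> F \<Longrightarrow> w' \<in> K"
  shows "comp E F v \<subseteq> K"
proof
  fix x assume "x \<in> comp E F v"
  hence "(v,x) \<in> (adj F (verts E))\<^sup>*" unfolding comp_def by simp
  thus "x \<in> K"
  proof (induction rule: rtrancl_induct)
    case base thus ?case using assms(1) .
  next
    case (step y z) thus ?case using assms(2) unfolding adj_def by blast
  qed
qed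

locale PD =
  fixes E :: "edge set" and HS :: "vert set" and EC :: "edge set"
  assumes wf: "wfE E" and pd: "pdata E HS EC"
begin

lemma pd_all: "finite HS \<and> HS \<subseteq> hexes E \<and> (\<forall>c\<in>HS. \<forall>d\<in>HS. c \<noteq> d \<longrightarrow> hv c \<inter> hv d = {}) \<and>
     EC \<subseteq> E \<and> (\<forall>e\<in>EC. \<forall>e'\<in>EC. e \<noteq> e' \<longrightarrow> e \<inter> e' = {}) \<and> (\<forall>e\<in>EC. \<forall>c\<in>HS. e \<inter> hv c = {}) \<and>
     verts E \<subseteq> \<Union>(hv ` HS) \<union> \<Union>EC" using pd unfolding pdata_def .
lemma pd_HS: "HS \<subseteq> hexes E" using pd_all by (elim conjE)
lemma pd_fin: "finite HS" using pd_all by (elim conjE)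
lemma pd_hvdisj: "c \<in> HS \<Longrightarrow> d \<in> HS \<Longrightarrow> c \<noteq> d \<Longrightarrow> hv c \<inter> hv d = {}"
proof -
  have "\<forall>c\<in>HS. \<forall>d\<in>HS. c \<noteq> d \<longrightarrow> hv c \<inter> hv d = {}" using pd_all by (elim conjE)
  thus "c \<in> HS \<Longrightarrow> d \<in> HS \<Longrightarrow> c \<noteq> d \<Longrightarrow> hv c \<inter> hv d = {}" by blast
qed
lemma pd_EC: "EC \<subseteq> E" using pd_all by (elim conjE)
lemma pd_ECdisj: "e \<in> EC \<Longrightarrow> e' \<in> EC \<Longrightarrow> e \<noteq> e' \<Longrightarrow> e \<inter> e' = {}"
proof -
  have "\<forall>e\<in>EC. \<forall>e'\<in>EC. e \<noteq> e' \<longrightarrow> e \<inter> e' = {}" using pd_all by (elim conjE)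
  thus "e \<in> EC \<Longrightarrow> e' \<in> EC \<Longrightarrow> e \<noteq> e' \<Longrightarrow> e \<inter> e' = {}" by blast
qed
lemma pd_ECHS: "e \<in> EC \<Longrightarrow> c \<in> HS \<Longrightarrow> e \<inter> hv c = {}"
proof -
  have "\<forall>e\<in>EC. \<forall>c\<in>HS. e \<inter> hv c = {}" using pd_all by (elim conjE)
  thus "e \<in> EC \<Longrightarrow> c \<in> HS \<Longrightarrow> e \<inter> hv c = {}" by blast
qed
lemma pd_cover: "v \<in> verts E \<Longrightarrow> (\<exists>c\<in>HS. v \<in> hv c) \<or> (\<exists>e\<in>EC. v \<in> e)"
proof -
  have "verts E \<subseteq> \<Union>(hv ` HS) \<union> \<Union>EC" using pd_all by (elim conjE)
  thus "v \<in> verts E \<Longrightarrow> (\<exists>c\<in>HS. v \<in> hv c) \<or> (\<exists>e\<in>EC. v \<in> e)" by blast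
qed
lemma wf_lat: "e \<in> E \<Longrightarrow> lattice_edge e" using wf unfolding wfE_def by simp

lemma EC_lat: "e \<in> EC \<Longrightarrow> lattice_edge e" using pd_EC wf_lat by blast

lemma cells_disj: "c \<in> HS \<Longrightarrow> d \<in> HS \<Longrightarrow> c \<noteq> d \<Longrightarrow> e \<in> cell_edges c \<Longrightarrow> e \<notin> cell_edges d"
proof
  assume h: "c \<in> HS" "d \<in> HS" "c \<noteq> d" "e \<in> cell_edges c" "e \<in> cell_edges d"
  obtain v where "v \<in> e" using ce_ne[OF h(4)] by blast
  hence "v \<in> hv c" "v \<in> hv d" using ce_sub_hv h(4,5) by blast+
  thus False using pd_hvdisj[OF h(1-3)] by blast
qed

lemma cells_notEC: "c \<in> HS \<Longrightarrow> e \<in> cell_edges c \<Longrightarrow> e \<notin> EC"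
proof
  assume h: "c \<in> HS" "e \<in> cell_edges c" "e \<in> EC"
  obtain v where "v \<in> e" using ce_ne[OF h(2)] by blast
  hence "v \<in> hv c" using ce_sub_hv h(2) by blast
  thus False using pd_ECHS[OF h(3,1)] \<open>v \<in> e\<close> by blast
qed

lemma U_sub: "U HS \<subseteq> E" unfolding U_def using pd_HS cells_in_E by blast

abbreviation "FF \<equiv> EC \<union> U HS"

lemma comp_hex:
  assumes c: "c \<in> HS" and v: "v \<in> hv c"
  shows "comp E FF v = hv c"
proof
  show "comp E FF v \<subseteq> hv c"
  proof (rule comp_closed[OF v])
    fix w w' assume w: "w \<in> hv c" and ww: "{w,w'} \<in> FF"
    show "w' \<in> hv c"
    proof (cases "{w,w'} \<in> EC")
      case True thus ?thesis using pd_ECHS[OF True c] w by blast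
    next
      case False
      then obtain d where d: "d \<in> HS" "{w,w'} \<in> cell_edges d" using ww unfolding U_def by blast
      hence "w \<in> hv d" using ce_sub_hv by blast
      hence "d = c" using pd_hvdisj[OF d(1) c] w by blast
      thus ?thesis using d ce_sub_hv by blast
    qed
  qed
next
  have cE: "cell_edges c \<subseteq> E" using c pd_HS cells_in_E by blast
  obtain k where k: "v = cell_vertex c k" using v unfolding hv_def by blast
  have reach: "(cell_vertex c k, cell_vertex c (k+m)) \<in> (adj FF (verts E))\<^sup>*" for m
  proof (induction m)
    case 0 thus ?case by simp
  next
    case (Suc m)
    have e: "cell_edge c (k+m) \<in> FF" using c ce_in_cells unfolding U_def by blast
    have "cell_edge c (k+m) \<in> E" using cE ce_in_cells by blast
    hence "cell_vertex c (k+m) \<in> verts E" "cell_vertex c (Suc (k+m)) \<in> verts E"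
      using verts_I ce_mem by blast+
    hence "(cell_vertex c (k+m), cell_vertex c (k + Suc m)) \<in> adj FF (verts E)"
      using e adjI[of "cell_vertex c (k+m)" "cell_vertex c (Suc (k+m))"] unfolding cell_edge_def by simp
    thus ?case by (rule rtrancl_into_rtrancl[OF Suc.IH])
  qed
  show "hv c \<subseteq> comp E FF v"
  proof
    fix w assume "w \<in> hv c"
    then obtain i where i: "w = cell_vertex c i" unfolding hv_def by blast
    have "cell_vertex c (k + (5*k + i)) = cell_vertex c i" unfolding cv_inj_mod by simp
    thus "w \<in> comp E FF v" using reach[of "5*k+i"] k i unfolding comp_def by simp
  qed
qed

lemma comp_ec:
  assumes e: "e \<in> EC" and v: "v \<in> e"
  shows "comp E FF v = e"
proof
  show "comp E FF v \<subseteq> e"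
  proof (rule comp_closed[OF v])
    fix w w' assume w: "w \<in> e" and ww: "{w,w'} \<in> FF"
    show "w' \<in> e"
    proof (cases "{w,w'} \<in> EC")
      case True thus ?thesis using pd_ECdisj[OF True e] w by blast
    next
      case False
      then obtain d where d: "d \<in> HS" "{w,w'} \<in> cell_edges d" using ww unfolding U_def by blast
      hence "w \<in> hv d" using ce_sub_hv by blast
      thus ?thesis using pd_ECHS[OF e d(1)] w by blast
    qed
  qed
next
  obtain w where ew: "e = {v,w}" using lat_other[OF EC_lat[OF e] v] by blast
  have "e \<in> E" using e pd_EC by blast
  hence "v \<in> verts E" "w \<in> verts E" using verts_I ew by blast+
  hence "(v,w) \<in> adj FF (verts E)" using adjI[of v w] e ew by blast
  thus "e \<subseteq> comp E FF v" unfolding comp_def using ew by auto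
qed

lemma compe_hex:
  assumes c: "c \<in> HS" and v: "v \<in> hv c"
  shows "comp_edges E FF v = cell_edges c"
proof -
  have "{e \<in> FF. e \<subseteq> hv c} = cell_edges c"
  proof
    show "cell_edges c \<subseteq> {e \<in> FF. e \<subseteq> hv c}" using c ce_sub_hv unfolding U_def by blast
    show "{e \<in> FF. e \<subseteq> hv c} \<subseteq> cell_edges c"
    proof (rule subsetI)
      fix e assume "e \<in> {e \<in> FF. e \<subseteq> hv c}"
      hence e: "e \<in> FF" "e \<subseteq> hv c" by auto
      show "e \<in> cell_edges c"
      proof (cases "e \<in> EC")
        case True thus ?thesis using pd_ECHS[OF True c] e(2) lat_ne[OF EC_lat[OF True]] by blast
      next
        case False
        then obtain d where d: "d \<in> HS" "e \<in> cell_edges d" using e unfolding U_def by blast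
        have "d = c" using pd_hvdisj[OF d(1) c] e(2) ce_sub_hv[OF d(2)] ce_ne[OF d(2)] by blast
        thus ?thesis using d by simp
      qed
    qed
  qed
  thus ?thesis unfolding comp_edges_def comp_hex[OF assms] .
qed

lemma compe_ec:
  assumes e: "e \<in> EC" and v: "v \<in> e"
  shows "comp_edges E FF v = {e}"
proof -
  have "{e' \<in> FF. e' \<subseteq> e} = {e}"
  proof
    show "{e} \<subseteq> {e' \<in> FF. e' \<subseteq> e}" using e by blast
    show "{e' \<in> FF. e' \<subseteq> e} \<subseteq> {e}"
    proof (rule subsetI)
      fix e' assume "e' \<in> {e' \<in> FF. e' \<subseteq> e}"
      hence e': "e' \<in> FF" "e' \<subseteq> e" by auto
      show "e' \<in> {e}"
      proof (cases "e' \<in> EC")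
        case True thus ?thesis using pd_ECdisj[OF True e] e'(2) lat_ne[OF EC_lat[OF True]] by blast
      next
        case False
        then obtain d where d: "d \<in> HS" "e' \<in> cell_edges d" using e' unfolding U_def by blast
        thus ?thesis using pd_ECHS[OF e d(1)] e'(2) ce_sub_hv[OF d(2)] ce_ne[OF d(2)] by blast
      qed
    qed
  qed
  thus ?thesis unfolding comp_edges_def comp_ec[OF assms] .
qed

lemma lemG:
  shows "clar_cover E FF" "hex_comps E FF = HS" "edge_comps E FF = EC"
proof -
  show "clar_cover E FF" unfolding clar_cover_def
  proof (intro conjI ballI)
    show "FF \<subseteq> E" by (rule Un_least[OF pd_EC U_sub])
    fix v assume v: "v \<in> verts E"
    show "(\<exists>c\<in>hexes E. comp_edges E FF v = cell_edges c) \<or> (\<exists>e. comp_edges E FF v = {e})"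
    proof (cases "\<exists>c\<in>HS. v \<in> hv c")
      case True
      then obtain c where c: "c \<in> HS" "v \<in> hv c" by blast
      hence "c \<in> hexes E" using pd_HS by blast
      thus ?thesis using compe_hex[OF c] by blast
    next
      case False
      then obtain e where e: "e \<in> EC" "v \<in> e" using pd_cover[OF v] by blast
      thus ?thesis using compe_ec[OF e] by blast
    qed
  qed
  show "hex_comps E FF = HS"
  proof
    show "hex_comps E FF \<subseteq> HS"
    proof
      fix c assume "c \<in> hex_comps E FF"
      then obtain v where c: "c \<in> hexes E" "v \<in> verts E" "comp_edges E FF v = cell_edges c"
        unfolding hex_comps_def by blast
      show "c \<in> HS"
      using pd_cover[OF c(2)] proof
        assume "\<exists>d\<in>HS. v \<in> hv d"
        then obtain d where d: "d \<in> HS" "v \<in> hv d" by blast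
        hence "cell_edges d = cell_edges c" using compe_hex c by simp
        hence "d = c" using cells_sub_eq hexes_cell c(1) d(1) pd_HS by blast
        thus ?thesis using d by simp
      next
        assume "\<exists>e\<in>EC. v \<in> e"
        then obtain e where "e \<in> EC" "v \<in> e" by blast
        hence "cell_edges c = {e}" using compe_ec c by simp
        thus ?thesis using card_cells[of c] by simp
      qed
    qed
    show "HS \<subseteq> hex_comps E FF"
    proof
      fix c assume c: "c \<in> HS"
      have "cell_vertex c 0 \<in> hv c" by (rule cv_in_hv)
      moreover have "hv c \<subseteq> verts E" using c pd_HS hv_verts by blast
      ultimately show "c \<in> hex_comps E FF" unfolding hex_comps_def using compe_hex[OF c] c pd_HS by blast
    qed
  qed
  show "edge_comps E FF = EC"
  proof
    show "edge_comps E FF \<subseteq> EC"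
    proof
      fix e assume "e \<in> edge_comps E FF"
      then obtain v where c: "v \<in> verts E" "comp_edges E FF v = {e}"
        unfolding edge_comps_def by blast
      show "e \<in> EC"
      using pd_cover[OF c(1)] proof
        assume "\<exists>d\<in>HS. v \<in> hv d"
        then obtain d where d: "d \<in> HS" "v \<in> hv d" by blast
        hence "cell_edges d = {e}" using compe_hex c by simp
        thus ?thesis using card_cells[of d] by simp
      next
        assume "\<exists>e\<in>EC. v \<in> e"
        then obtain e' where "e' \<in> EC" "v \<in> e'" by blast
        thus ?thesis using compe_ec c by simp
      qed
    qed
    show "EC \<subseteq> edge_comps E FF"
    proof
      fix e assume e: "e \<in> EC"
      obtain v where v: "v \<in> e" using lat_ne[OF EC_lat[OF e]] by blast
      have "v \<in> verts E" using verts_I v e pd_EC by blast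
      thus "e \<in> edge_comps E FF" unfolding edge_comps_def using compe_ec[OF e v] by blast
    qed
  qed
qed

end



lemma card_bool_lists: "card {xs::bool list. length xs = n} = 2^n"
  using card_lists_length_eq[of "UNIV::bool set" n] by simp

lemma fin_bool_lists: "finite {xs::bool list. length xs = n}"
  using finite_lists_length_eq[of "UNIV::bool set" n] by simp

lemma hyp_edge: "{xs,ys} \<in> snd (hypercube n) \<longleftrightarrow>
   length xs = n \<and> length ys = n \<and> card {i. i < n \<and> xs ! i \<noteq> ys ! i} = 1"
proof
  assume "{xs,ys} \<in> snd (hypercube n)"
  then obtain as bs where h: "{xs,ys} = {as,bs}" "length as = n" "length bs = n"
     "card {i. i < n \<and> as ! i \<noteq> bs ! i} = 1" unfolding hypercube_def by auto
  from h(1) have "(xs = as \<and> ys = bs) \<or> (xs = bs \<and> ys = as)" by (metis doubleton_eq_iff)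
  moreover have "{i. i < n \<and> bs ! i \<noteq> as ! i} = {i. i < n \<and> as ! i \<noteq> bs ! i}" by blast
  ultimately show "length xs = n \<and> length ys = n \<and> card {i. i < n \<and> xs ! i \<noteq> ys ! i} = 1"
    using h by (elim disjE) simp_all
next
  assume "length xs = n \<and> length ys = n \<and> card {i. i < n \<and> xs ! i \<noteq> ys ! i} = 1"
  thus "{xs,ys} \<in> snd (hypercube n)" unfolding hypercube_def by auto
qed

lemma induced_edge: "u \<in> W \<Longrightarrow> v \<in> W \<Longrightarrow> {u,v} \<in> snd (induced_subgraph G W) \<longleftrightarrow> {u,v} \<in> snd G"
  unfolding induced_subgraph_def by auto

lemma par6: "(i::nat) < 6 \<Longrightarrow> odd (Suc i mod 6) \<longleftrightarrow> \<not> odd (i mod 6)"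
  by (auto dest!: less6)

context PD begin

definition cs :: "vert list" where "cs = (SOME xs. set xs = HS \<and> distinct xs)"

lemma cs_prop: "set cs = HS" "distinct cs"
proof -
  have "\<exists>xs. set xs = HS \<and> distinct xs" using finite_distinct_list[OF pd_fin] .
  hence "set cs = HS \<and> distinct cs" unfolding cs_def by (rule someI_ex)
  thus "set cs = HS" "distinct cs" by auto
qed

lemma len_cs: "length cs = card HS" using cs_prop distinct_card by metis

lemma cs_in: "j < length cs \<Longrightarrow> cs ! j \<in> HS" using cs_prop(1) nth_mem by blast

lemma cs_inj: "j < length cs \<Longrightarrow> k < length cs \<Longrightarrow> cs ! j = cs ! k \<Longrightarrow> j = k"
  using cs_prop(2) nth_eq_iff_index_eq by blast

lemma HS_ex: "c \<in> HS \<Longrightarrow> \<exists>j<length cs. cs ! j = c"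
  using cs_prop(1) in_set_conv_nth by metis

definition mat :: "bool list \<Rightarrow> edge set" where
  "mat xs = EC \<union> (\<Union>j\<in>{..<length cs}. half (cs!j) (xs!j))"

definition recm :: "edge set \<Rightarrow> bool list" where
  "recm M = map (\<lambda>c. cell_edge c 1 \<in> M) cs"

lemma mat_cell:
  assumes j: "j < length cs" and e: "e \<in> cell_edges (cs!j)"
  shows "e \<in> mat xs \<longleftrightarrow> e \<in> half (cs!j) (xs!j)"
proof
  assume "e \<in> mat xs"
  hence "e \<in> EC \<or> (\<exists>k<length cs. e \<in> half (cs!k) (xs!k))" unfolding mat_def by blast
  thus "e \<in> half (cs!j) (xs!j)"
  proof
    assume "e \<in> EC" thus ?thesis using cells_notEC[OF cs_in[OF j] e] by blast
  next
    assume "\<exists>k<length cs. e \<in> half (cs!k) (xs!k)"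
    then obtain k where k: "k < length cs" "e \<in> half (cs!k) (xs!k)" by blast
    have "cs!k = cs!j"
    proof (rule ccontr)
      assume "cs!k \<noteq> cs!j"
      hence "cs!j \<noteq> cs!k" by metis
      from cells_disj[OF cs_in[OF j] cs_in[OF k(1)] this e] show False
        using half_sub[of "cs!k" "xs!k"] k(2) by blast
    qed
    hence "k = j" using cs_inj k(1) j by blast
    thus ?thesis using k by simp
  qed
next
  assume "e \<in> half (cs!j) (xs!j)" thus "e \<in> mat xs" unfolding mat_def using j by blast
qed

lemma mat_sub: "mat xs \<subseteq> EC \<union> U HS"
  unfolding mat_def U_def using half_sub cs_in by blast

lemma mat_E: "mat xs \<subseteq> E"
  using mat_sub pd_EC U_sub by blast

lemma mat_pm: "perfect_matching E (mat xs)"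
  unfolding perfect_matching_def
proof (intro conjI ballI)
  show "mat xs \<subseteq> E" by (rule mat_E)
  fix v assume v: "v \<in> verts E"
  show "\<exists>!e. e \<in> mat xs \<and> v \<in> e"
  proof (cases "\<exists>c\<in>HS. v \<in> hv c")
    case True
    then obtain c where c: "c \<in> HS" "v \<in> hv c" by blast
    then obtain j where j: "j < length cs" "cs!j = c" using HS_ex by blast
    obtain e where e: "e \<in> half c (xs!j)" "v \<in> e" "\<And>e'. e' \<in> half c (xs!j) \<and> v \<in> e' \<Longrightarrow> e' = e"
      using half_pm[OF c(2), of "xs!j"] by blast
    show ?thesis
    proof (rule ex1I[of _ e])
      show "e \<in> mat xs \<and> v \<in> e" using e j unfolding mat_def by blast
    next
      fix e' assume e': "e' \<in> mat xs \<and> v \<in> e'"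
      hence "e' \<in> EC \<or> (\<exists>k<length cs. e' \<in> half (cs!k) (xs!k))" unfolding mat_def by blast
      thus "e' = e"
      proof
        assume "e' \<in> EC" thus ?thesis using pd_ECHS[of e' c] c e' by blast
      next
        assume "\<exists>k<length cs. e' \<in> half (cs!k) (xs!k)"
        then obtain k where k: "k < length cs" "e' \<in> half (cs!k) (xs!k)" by blast
        have "v \<in> hv (cs!k)" using k(2) half_sub ce_sub_hv e' by blast
        hence "cs!k = c" using pd_hvdisj[OF cs_in[OF k(1)] c(1)] c(2) by blast
        hence "k = j" using cs_inj k(1) j by blast
        thus ?thesis using k e' e(3) j by blast
      qed
    qed
  next
    case False
    then obtain e0 where e0: "e0 \<in> EC" "v \<in> e0" using pd_cover[OF v] by blast
    show ?thesis
    proof (rule ex1I[of _ e0])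
      show "e0 \<in> mat xs \<and> v \<in> e0" using e0 unfolding mat_def by blast
    next
      fix e' assume e': "e' \<in> mat xs \<and> v \<in> e'"
      hence "e' \<in> EC \<or> (\<exists>k<length cs. e' \<in> half (cs!k) (xs!k))" unfolding mat_def by blast
      thus "e' = e0"
      proof
        assume "e' \<in> EC" thus ?thesis using pd_ECdisj[of e' e0] e0 e' by blast
      next
        assume "\<exists>k<length cs. e' \<in> half (cs!k) (xs!k)"
        then obtain k where k: "k < length cs" "e' \<in> half (cs!k) (xs!k)" by blast
        have "v \<in> hv (cs!k)" using k(2) half_sub ce_sub_hv e' by blast
        thus ?thesis using False cs_in[OF k(1)] by blast
      qed
    qed
  qed
qed

lemma mat_alt:
  assumes j: "j < length cs"
  shows "alternating (mat xs) (cs!j)"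
  unfolding alternating_def
proof (intro allI impI)
  fix i :: nat assume i: "i < 6"
  have "cell_edge (cs!j) i \<in> mat xs \<longleftrightarrow> odd (i mod 6) = xs!j"
    using mat_cell[OF j ce_in_cells] half_mem by blast
  moreover have "cell_edge (cs!j) (Suc i) \<in> mat xs \<longleftrightarrow> odd (Suc i mod 6) = xs!j"
    using mat_cell[OF j ce_in_cells] half_mem by blast
  ultimately show "cell_edge (cs!j) i \<in> mat xs \<longleftrightarrow> cell_edge (cs!j) (Suc i) \<notin> mat xs"
    using par6[OF i] by blast
qed

lemma mat_PP: "mat xs \<in> PP E HS EC"
  unfolding PP_def
proof (intro CollectI conjI ballI)
  show "perfect_matching E (mat xs)" by (rule mat_pm)
  fix c assume "c \<in> HS"
  then obtain j where "j < length cs" "cs!j = c" using HS_ex by blast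
  thus "alternating (mat xs) c" using mat_alt by blast
next
  fix e assume "e \<in> EC" thus "e \<in> mat xs" unfolding mat_def by blast
qed

lemma len_recm: "length (recm M) = length cs" unfolding recm_def by simp

lemma PP_mat:
  assumes M: "M \<in> PP E HS EC"
  shows "M = mat (recm M)"
proof
  have pm: "perfect_matching E M" and alt: "\<And>c. c \<in> HS \<Longrightarrow> alternating M c"
    and ec: "EC \<subseteq> M" using M unfolding PP_def by blast+
  show "M \<subseteq> mat (recm M)"
  proof
    fix e assume e: "e \<in> M"
    have eE: "e \<in> E" using pm e unfolding perfect_matching_def by blast
    obtain v where v: "v \<in> e" using lat_ne[OF wf_lat[OF eE]] by blast
    have vE: "v \<in> verts E" using verts_I[OF eE v] .
    show "e \<in> mat (recm M)"
    proof (cases "\<exists>c\<in>HS. v \<in> hv c")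
      case True
      then obtain c where c: "c \<in> HS" "v \<in> hv c" by blast
      then obtain j where j: "j < length cs" "cs!j = c" using HS_ex by blast
      have "e \<in> cell_edges c" using alt_vert[OF pm alt[OF c(1)] _ c(2) e v] c(1) pd_HS by blast
      then obtain i where i: "e = cell_edge c i" unfolding cell_edges_alt by blast
      have "odd (i mod 6) = (cell_edge c 1 \<in> M)" using alt_formula[OF alt[OF c(1)], of i] e i by blast
      moreover have "recm M ! j = (cell_edge c 1 \<in> M)" unfolding recm_def using j by simp
      ultimately have "e \<in> half (cs!j) (recm M ! j)" using half_mem i j by simp
      thus ?thesis unfolding mat_def using j by blast
    next
      case False
      then obtain e0 where e0: "e0 \<in> EC" "v \<in> e0" using pd_cover[OF vE] by blast
      have "e = e0" using pm_unique[OF pm e _ v e0(2)] e0 ec by blast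
      thus ?thesis using e0 unfolding mat_def by blast
    qed
  qed
  show "mat (recm M) \<subseteq> M"
  proof
    fix e assume "e \<in> mat (recm M)"
    hence "e \<in> EC \<or> (\<exists>j<length cs. e \<in> half (cs!j) (recm M ! j))" unfolding mat_def by blast
    thus "e \<in> M"
    proof
      assume "e \<in> EC" thus ?thesis using ec by blast
    next
      assume "\<exists>j<length cs. e \<in> half (cs!j) (recm M ! j)"
      then obtain j where j: "j < length cs" "e \<in> half (cs!j) (recm M ! j)" by blast
      then obtain i where i: "i < 6" "e = cell_edge (cs!j) i" "odd i = recm M ! j"
        unfolding half_def by blast
      have "recm M ! j = (cell_edge (cs!j) 1 \<in> M)" unfolding recm_def using j by simp
      thus ?thesis using alt_formula[OF alt[OF cs_in[OF j(1)]], of i] i by simp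
    qed
  qed
qed

lemma recm_mat: "length xs = length cs \<Longrightarrow> recm (mat xs) = xs"
proof (rule nth_equalityI)
  assume l: "length xs = length cs"
  show "length (recm (mat xs)) = length xs" using l len_recm by simp
  fix j assume "j < length (recm (mat xs))"
  hence j: "j < length cs" using len_recm by simp
  have "recm (mat xs) ! j = (cell_edge (cs!j) 1 \<in> mat xs)" unfolding recm_def using j by simp
  also have "\<dots> = (cell_edge (cs!j) 1 \<in> half (cs!j) (xs!j))" using mat_cell[OF j ce_in_cells] .
  also have "\<dots> = xs!j" using half_mem[of "cs!j" 1] by simp
  finally show "recm (mat xs) ! j = xs ! j" .
qed

lemma sd_mat: "sd (mat xs) (mat ys) = (\<Union>j\<in>{j. j < length cs \<and> xs!j \<noteq> ys!j}. cell_edges (cs!j))"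
proof
  show "sd (mat xs) (mat ys) \<subseteq> (\<Union>j\<in>{j. j < length cs \<and> xs!j \<noteq> ys!j}. cell_edges (cs!j))"
  proof
    fix e assume e: "e \<in> sd (mat xs) (mat ys)"
    hence "e \<notin> EC" unfolding sd_def mat_def by blast
    moreover have "e \<in> mat xs \<union> mat ys" using e unfolding sd_def by blast
    ultimately obtain j where j: "j < length cs" "e \<in> half (cs!j) (xs!j) \<or> e \<in> half (cs!j) (ys!j)"
      unfolding mat_def by blast
    have ec: "e \<in> cell_edges (cs!j)" using j(2) half_sub by blast
    have "xs!j \<noteq> ys!j"
    proof
      assume "xs!j = ys!j"
      hence "(e \<in> mat xs) = (e \<in> mat ys)" using mat_cell[OF j(1) ec] by simp
      thus False using e unfolding sd_def by blast
    qed
    thus "e \<in> (\<Union>j\<in>{j. j < length cs \<and> xs!j \<noteq> ys!j}. cell_edges (cs!j))" using j ec by blast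
  qed
  show "(\<Union>j\<in>{j. j < length cs \<and> xs!j \<noteq> ys!j}. cell_edges (cs!j)) \<subseteq> sd (mat xs) (mat ys)"
  proof
    fix e assume "e \<in> (\<Union>j\<in>{j. j < length cs \<and> xs!j \<noteq> ys!j}. cell_edges (cs!j))"
    then obtain j where j: "j < length cs" "xs!j \<noteq> ys!j" "e \<in> cell_edges (cs!j)" by blast
    have "e \<in> half (cs!j) (xs!j) \<or> e \<in> half (cs!j) (\<not> xs!j)" using cells_half[OF j(3)] .
    moreover have "ys!j = (\<not> xs!j)" using j(2) by blast
    moreover have "\<not> (e \<in> half (cs!j) (xs!j) \<and> e \<in> half (cs!j) (\<not> xs!j))"
      using half_disj[of e "cs!j" "xs!j" "\<not> xs!j"] by blast
    ultimately have "(e \<in> half (cs!j) (xs!j)) \<noteq> (e \<in> half (cs!j) (ys!j))"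
      by (simp; blast)
    hence "(e \<in> mat xs) \<noteq> (e \<in> mat ys)" using mat_cell[OF j(1) j(3)] by simp
    thus "e \<in> sd (mat xs) (mat ys)" unfolding sd_def by blast
  qed
qed

lemma adj_iff: "(\<exists>c\<in>hexes E. sd (mat xs) (mat ys) = cell_edges c) \<longleftrightarrow>
    card {j. j < length cs \<and> xs!j \<noteq> ys!j} = 1"
proof
  let ?D = "{j. j < length cs \<and> xs!j \<noteq> ys!j}"
  assume "\<exists>c\<in>hexes E. sd (mat xs) (mat ys) = cell_edges c"
  then obtain c where c: "c \<in> hexes E" "sd (mat xs) (mat ys) = cell_edges c" by blast
  have ne: "?D \<noteq> {}"
  proof
    assume "?D = {}"
    have "sd (mat xs) (mat ys) = (\<Union>j\<in>?D. cell_edges (cs!j))" by (rule sd_mat)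
    also have "\<dots> = {}" using \<open>?D = {}\<close> by (simp only: UN_empty)
    finally have "cell_edges c = {}" using c(2) by simp
    thus False using card_cells[of c] by simp
  qed
  have eq: "\<And>j. j \<in> ?D \<Longrightarrow> cs!j = c"
  proof -
    fix j assume j: "j \<in> ?D"
    have "cell_edges (cs!j) \<subseteq> (\<Union>j\<in>?D. cell_edges (cs!j))" using j by blast
    hence "cell_edges (cs!j) \<subseteq> cell_edges c" using c(2) sd_mat[of xs ys] by simp
    moreover have "is_cell (cs!j)" using cs_in j pd_HS hexes_cell by blast
    ultimately show "cs!j = c" using cells_sub_eq hexes_cell[OF c(1)] by blast
  qed
  obtain j0 where j0: "j0 \<in> ?D" using ne by blast
  have "?D = {j0}"
  proof
    show "?D \<subseteq> {j0}"
    proof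
      fix j assume j: "j \<in> ?D"
      have "cs!j = cs!j0" using eq[OF j] eq[OF j0] by simp
      thus "j \<in> {j0}" using cs_inj j j0 by blast
    qed
    show "{j0} \<subseteq> ?D" using j0 by blast
  qed
  thus "card ?D = 1" by simp
next
  let ?D = "{j. j < length cs \<and> xs!j \<noteq> ys!j}"
  assume "card ?D = 1"
  then obtain j where j: "?D = {j}" by (rule card_1_singletonE)
  hence "sd (mat xs) (mat ys) = cell_edges (cs!j)" using sd_mat[of xs ys] by (simp only: UN_insert UN_empty Un_empty_right)
  moreover have "cs!j \<in> hexes E" using j cs_in pd_HS by blast
  ultimately show "\<exists>c\<in>hexes E. sd (mat xs) (mat ys) = cell_edges c" by blast
qed

lemma PP_bij: "bij_betw recm (PP E HS EC) {xs. length xs = card HS}"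
proof (rule bij_betw_byWitness[where f'=mat])
  show "\<forall>a\<in>PP E HS EC. mat (recm a) = a" using PP_mat by auto
  show "\<forall>a'\<in>{xs. length xs = card HS}. recm (mat a') = a'" using recm_mat len_cs by auto
  show "recm ` PP E HS EC \<subseteq> {xs. length xs = card HS}" using len_recm len_cs by auto
  show "mat ` {xs. length xs = card HS} \<subseteq> PP E HS EC" using mat_PP by auto
qed

lemma PP_iso: "graph_iso (induced_subgraph (resonance_graph E) (PP E HS EC)) (hypercube (card HS))"
  unfolding graph_iso_def
proof (intro exI conjI ballI)
  show "bij_betw recm (fst (induced_subgraph (resonance_graph E) (PP E HS EC))) (fst (hypercube (card HS)))"
    using PP_bij unfolding induced_subgraph_def hypercube_def by simp
  fix u v assume "u \<in> fst (induced_subgraph (resonance_graph E) (PP E HS EC))"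
    "v \<in> fst (induced_subgraph (resonance_graph E) (PP E HS EC))"
  hence u: "u \<in> PP E HS EC" and v: "v \<in> PP E HS EC" unfolding induced_subgraph_def by auto
  have pm: "perfect_matching E u" "perfect_matching E v" using u v unfolding PP_def by auto
  have "{u,v} \<in> snd (induced_subgraph (resonance_graph E) (PP E HS EC)) \<longleftrightarrow>
        (\<exists>c\<in>hexes E. sd u v = cell_edges c)"
    using induced_edge[OF u v] res_edge pm by blast
  also have "\<dots> \<longleftrightarrow> (\<exists>c\<in>hexes E. sd (mat (recm u)) (mat (recm v)) = cell_edges c)"
    using PP_mat[OF u] PP_mat[OF v] by simp
  also have "\<dots> \<longleftrightarrow> card {j. j < length cs \<and> recm u ! j \<noteq> recm v ! j} = 1" by (rule adj_iff)
  also have "\<dots> \<longleftrightarrow> {recm u, recm v} \<in> snd (hypercube (card HS))"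
    using hyp_edge len_recm len_cs by simp
  finally show "{u,v} \<in> snd (induced_subgraph (resonance_graph E) (PP E HS EC)) \<longleftrightarrow>
       {recm u, recm v} \<in> snd (hypercube (card HS))" .
qed

lemma PP_union: "\<Union>(PP E HS EC) = EC \<union> U HS"
proof
  show "\<Union>(PP E HS EC) \<subseteq> EC \<union> U HS" using PP_mat mat_sub by blast
  show "EC \<union> U HS \<subseteq> \<Union>(PP E HS EC)"
  proof
    fix e assume "e \<in> EC \<union> U HS"
    thus "e \<in> \<Union>(PP E HS EC)"
    proof
      assume "e \<in> EC" thus ?thesis using mat_PP[of "[]"] unfolding mat_def by blast
    next
      assume "e \<in> U HS"
      then obtain c where c: "c \<in> HS" "e \<in> cell_edges c" unfolding U_def by blast
      then obtain j where j: "j < length cs" "cs!j = c" using HS_ex by blast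
      obtain b where b: "e \<in> half c b" using cells_half[OF c(2), of True] by blast
      let ?xs = "replicate (length cs) b"
      have "e \<in> mat ?xs" using mat_cell[of j e ?xs] j b c by simp
      thus ?thesis using mat_PP by blast
    qed
  qed
qed

lemma PP_card: "finite (PP E HS EC)" "card (PP E HS EC) = 2 ^ card HS"
  using bij_betw_finite[OF PP_bij] fin_bool_lists bij_betw_same_card[OF PP_bij] card_bool_lists
  by auto

end



lemma comp_mem:
  assumes "u \<in> comp E F v" shows "comp E F u = comp E F v"
proof -
  let ?R = "adj F (verts E)"
  have vu: "(v,u) \<in> ?R\<^sup>*" using assms unfolding comp_def by simp
  have "sym (?R\<^sup>*)" using sym_rtrancl[OF adj_sym] .
  hence uv: "(u,v) \<in> ?R\<^sup>*" using vu by (rule symD)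
  show ?thesis unfolding comp_def
  proof (intro Collect_cong iffI)
    fix x assume "(u,x) \<in> ?R\<^sup>*" thus "(v,x) \<in> ?R\<^sup>*" using vu by (rule rtrancl_trans[rotated])
  next
    fix x assume "(v,x) \<in> ?R\<^sup>*" thus "(u,x) \<in> ?R\<^sup>*" using uv by (rule rtrancl_trans[rotated])
  qed
qed

lemma compe_eq:
  assumes "u \<in> \<Union>(comp_edges E F v)" shows "comp_edges E F u = comp_edges E F v"
proof -
  have "u \<in> comp E F v" using assms unfolding comp_edges_def by blast
  thus ?thesis unfolding comp_edges_def using comp_mem by metis
qed

lemma compe_F: "comp_edges E F v \<subseteq> F" unfolding comp_edges_def by blast

lemma self_in:
  assumes wf: "wfE E" and FE: "F \<subseteq> E" and v: "v \<in> verts E" and ne: "comp_edges E F v \<noteq> {}"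
  shows "v \<in> \<Union>(comp_edges E F v)"
proof -
  let ?R = "adj F (verts E)"
  obtain e where e: "e \<in> comp_edges E F v" using ne by blast
  have eF: "e \<in> F" and ec: "e \<subseteq> comp E F v" using e unfolding comp_edges_def by auto
  have "lattice_edge e" using eF FE wf unfolding wfE_def by blast
  then obtain w where w: "w \<in> e" using lat_ne by blast
  hence vw: "(v,w) \<in> ?R\<^sup>*" using ec unfolding comp_def by blast
  show ?thesis
  using vw proof (cases rule: converse_rtranclE)
    case base thus ?thesis using w e by blast
  next
    case (step y)
    hence y: "{v,y} \<in> F" "v \<in> verts E" "y \<in> verts E" unfolding adj_def by auto
    have "v \<in> comp E F v" "y \<in> comp E F v" unfolding comp_def using step(1) by auto
    hence "{v,y} \<in> comp_edges E F v" unfolding comp_edges_def using y by auto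
    thus ?thesis by blast
  qed
qed

lemma hexes_fin: assumes wf: "wfE E" shows "finite (hexes E)"
proof -
  have "\<And>e. e \<in> E \<Longrightarrow> finite e" using wf lattice_two unfolding wfE_def by fastforce
  hence fv: "finite (verts E)" using wf unfolding wfE_def verts_def by blast
  have "hexes E \<subseteq> verts E"
  proof
    fix c assume c: "c \<in> hexes E"
    have "cell_vertex c 0 = c" by (cases c) simp
    thus "c \<in> verts E" using hv_verts[OF c] cv_in_hv[of c 0] by auto
  qed
  thus ?thesis using fv finite_subset by blast
qed

lemma clar_cover_pd:
  assumes wf: "wfE E" and cc: "clar_cover E F"
  shows "pdata E (hex_comps E F) (edge_comps E F) \<and> F = edge_comps E F \<union> U (hex_comps E F)"
proof -
  let ?HS = "hex_comps E F" and ?EC = "edge_comps E F"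
  have FE: "F \<subseteq> E" using cc unfolding clar_cover_def by blast
  have kind: "\<And>v. v \<in> verts E \<Longrightarrow> (\<exists>c\<in>hexes E. comp_edges E F v = cell_edges c) \<or> (\<exists>e. comp_edges E F v = {e})"
    using cc unfolding clar_cover_def by blast
  have nonempty: "\<And>v. v \<in> verts E \<Longrightarrow> comp_edges E F v \<noteq> {}"
  proof -
    fix v assume v: "v \<in> verts E"
    show "comp_edges E F v \<noteq> {}"
      using kind[OF v] card_cells by (metis card.empty insert_not_empty zero_neq_numeral)
  qed
  have selfv: "\<And>v. v \<in> verts E \<Longrightarrow> v \<in> \<Union>(comp_edges E F v)"
    using self_in[OF wf FE] nonempty by blast
  have HS_sub: "?HS \<subseteq> hexes E" unfolding hex_comps_def by blast
  have fin: "finite ?HS" using hexes_fin[OF wf] HS_sub finite_subset by blast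
  have hexpiece: "\<And>c u. c \<in> ?HS \<Longrightarrow> u \<in> hv c \<Longrightarrow> comp_edges E F u = cell_edges c"
  proof -
    fix c u assume c: "c \<in> ?HS" and u: "u \<in> hv c"
    then obtain v where "comp_edges E F v = cell_edges c" unfolding hex_comps_def by blast
    moreover have "u \<in> \<Union>(cell_edges c)" using u hv_union by blast
    ultimately show "comp_edges E F u = cell_edges c" using compe_eq by metis
  qed
  have edgepiece: "\<And>e u. e \<in> ?EC \<Longrightarrow> u \<in> e \<Longrightarrow> comp_edges E F u = {e}"
  proof -
    fix e u assume e: "e \<in> ?EC" and u: "u \<in> e"
    then obtain v where "comp_edges E F v = {e}" unfolding edge_comps_def by blast
    moreover have "u \<in> \<Union>{e}" using u by blast
    ultimately show "comp_edges E F u = {e}" using compe_eq by metis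
  qed
  have p3: "\<forall>c\<in>?HS. \<forall>d\<in>?HS. c \<noteq> d \<longrightarrow> hv c \<inter> hv d = {}"
  proof (intro ballI impI)
    fix c d assume c: "c \<in> ?HS" and d: "d \<in> ?HS" and cd: "c \<noteq> d"
    show "hv c \<inter> hv d = {}"
    proof (rule ccontr)
      assume "hv c \<inter> hv d \<noteq> {}"
      then obtain u where "u \<in> hv c" "u \<in> hv d" by blast
      hence "cell_edges c = cell_edges d" using hexpiece c d by metis
      hence "c = d" using cells_sub_eq HS_sub c d hexes_cell by blast
      thus False using cd by simp
    qed
  qed
  have p4: "?EC \<subseteq> E"
  proof
    fix e assume "e \<in> ?EC"
    then obtain v where "comp_edges E F v = {e}" unfolding edge_comps_def by blast
    thus "e \<in> E" using compe_F[of E F v] FE by blast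
  qed
  have p5: "\<forall>e\<in>?EC. \<forall>e'\<in>?EC. e \<noteq> e' \<longrightarrow> e \<inter> e' = {}"
  proof (intro ballI impI)
    fix e e' assume e: "e \<in> ?EC" "e' \<in> ?EC" "e \<noteq> e'"
    show "e \<inter> e' = {}"
    proof (rule ccontr)
      assume "e \<inter> e' \<noteq> {}"
      then obtain u where "u \<in> e" "u \<in> e'" by blast
      hence "{e} = {e'}" using edgepiece e by metis
      thus False using e by simp
    qed
  qed
  have p6: "\<forall>e\<in>?EC. \<forall>c\<in>?HS. e \<inter> hv c = {}"
  proof (intro ballI)
    fix e c assume e: "e \<in> ?EC" and c: "c \<in> ?HS"
    show "e \<inter> hv c = {}"
    proof (rule ccontr)
      assume "e \<inter> hv c \<noteq> {}"
      then obtain u where "u \<in> e" "u \<in> hv c" by blast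
      hence "{e} = cell_edges c" using edgepiece hexpiece e c by metis
      hence "card (cell_edges c) = card {e}" by simp
      thus False using card_cells[of c] by simp
    qed
  qed
  have p7: "verts E \<subseteq> \<Union>(hv ` ?HS) \<union> \<Union>?EC"
  proof
    fix v assume v: "v \<in> verts E"
    have sv: "v \<in> \<Union>(comp_edges E F v)" using selfv[OF v] .
    show "v \<in> \<Union>(hv ` ?HS) \<union> \<Union>?EC"
    using kind[OF v] proof
      assume "\<exists>c\<in>hexes E. comp_edges E F v = cell_edges c"
      then obtain c where c: "c \<in> hexes E" "comp_edges E F v = cell_edges c" by blast
      hence "c \<in> ?HS" unfolding hex_comps_def using v by blast
      moreover have "v \<in> hv c" using sv c(2) hv_union by blast
      ultimately show ?thesis by blast
    next
      assume "\<exists>e. comp_edges E F v = {e}"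
      then obtain e where e: "comp_edges E F v = {e}" by blast
      hence "e \<in> ?EC" unfolding edge_comps_def using v by auto
      moreover have "v \<in> e" using sv e by blast
      ultimately show ?thesis by blast
    qed
  qed
  have pd: "pdata E ?HS ?EC" unfolding pdata_def using fin HS_sub p3 p4 p5 p6 p7 by blast
  have FU: "F = ?EC \<union> U ?HS"
  proof
    show "F \<subseteq> ?EC \<union> U ?HS"
    proof
      fix e assume eF: "e \<in> F"
      hence eE: "e \<in> E" using FE by blast
      hence lat: "lattice_edge e" using wf unfolding wfE_def by blast
      obtain v where v: "v \<in> e" using lat_ne[OF lat] by blast
      obtain w where ew: "e = {v,w}" using lat_other[OF lat v] by blast
      have vE: "v \<in> verts E" "w \<in> verts E" using verts_I eE ew by blast+
      have "(v,w) \<in> adj F (verts E)" using adjI[of v w F] eF ew vE by blast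
      hence "w \<in> comp E F v" "v \<in> comp E F v" unfolding comp_def by auto
      hence "e \<in> comp_edges E F v" unfolding comp_edges_def using ew eF by blast
      show "e \<in> ?EC \<union> U ?HS"
      using kind[OF vE(1)] proof
        assume "\<exists>c\<in>hexes E. comp_edges E F v = cell_edges c"
        then obtain c where c: "c \<in> hexes E" "comp_edges E F v = cell_edges c" by blast
        hence "c \<in> ?HS" unfolding hex_comps_def using vE by blast
        thus ?thesis using c \<open>e \<in> comp_edges E F v\<close> unfolding U_def by blast
      next
        assume "\<exists>e. comp_edges E F v = {e}"
        then obtain e' where e': "comp_edges E F v = {e'}" by blast
        hence "e' \<in> ?EC" unfolding edge_comps_def using vE(1) by auto
        moreover have "e = e'" using e' \<open>e \<in> comp_edges E F v\<close> by simp
        ultimately show ?thesis by simp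
      qed
    qed
    show "?EC \<union> U ?HS \<subseteq> F"
    proof
      fix e assume "e \<in> ?EC \<union> U ?HS"
      then obtain v where "e \<in> comp_edges E F v"
        unfolding edge_comps_def hex_comps_def U_def by blast
      thus "e \<in> F" using compe_F[of E F v] by blast
    qed
  qed
  show ?thesis using pd FU by blast
qed




lemma sd_assoc: "sd (sd A B) C = sd A (sd B C)" unfolding sd_def by blast
lemma sd_inv: "sd A (sd A B) = B" unfolding sd_def by blast
lemma sd_empty: "sd A {} = A" unfolding sd_def by blast
lemma sd_eq_empty: "sd A B = {} \<longleftrightarrow> A = B" unfolding sd_def by blast
lemma sd_disj: "A \<inter> B = {} \<Longrightarrow> sd A B = A \<union> B" unfolding sd_def by blast
lemma sd_trans: "sd (sd M A) (sd A N) = sd M N" unfolding sd_def by blast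
lemma sd_cancel: "sd A B = sd A C \<Longrightarrow> B = C" by (metis sd_inv)

lemma cells_fin: "finite (cell_edges c)" by (rule card_ge_0_finite) (simp add: card_cells)

lemma face:
  assumes ca: "is_cell a" and cb: "is_cell b" and cc: "is_cell c" and cd: "is_cell d" and ab: "a \<noteq> b"
    and eq: "sd (cell_edges a) (cell_edges c) = sd (cell_edges b) (cell_edges d)"
    and ne: "sd (cell_edges a) (cell_edges c) \<noteq> {}"
  shows "c = b \<and> d = a"
proof -
  have c_b: "c = b"
  proof (rule ccontr)
    assume cnb: "c \<noteq> b"
    have cna: "c \<noteq> a" using ne sd_eq_empty by metis
    show False
    proof (cases "c = d")
      case True
      hence "sd (cell_edges c) (cell_edges a) = sd (cell_edges c) (cell_edges b)" using eq sd_comm by metis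
      hence "cell_edges a = cell_edges b" by (rule sd_cancel)
      hence "a = b" using cells_sub_eq ca cb by blast
      thus False using ab by simp
    next
      case False
      have sub: "cell_edges c - cell_edges a \<subseteq> (cell_edges c \<inter> cell_edges b) \<union> (cell_edges c \<inter> cell_edges d)"
        using eq unfolding sd_def by blast
      have "card (cell_edges c \<inter> cell_edges a) \<le> 1" using share_le1 cc ca cna by blast
      hence c1: "card (cell_edges c - cell_edges a) \<ge> 5"
        using card_Diff_subset_Int[of "cell_edges c" "cell_edges a"] cells_fin card_cells[of c] by simp
      have "card (cell_edges c \<inter> cell_edges b) \<le> 1" using share_le1 cc cb cnb by blast
      moreover have "card (cell_edges c \<inter> cell_edges d) \<le> 1" using share_le1 cc cd False by blast
      ultimately have "card ((cell_edges c \<inter> cell_edges b) \<union> (cell_edges c \<inter> cell_edges d)) \<le> 2"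
        using card_Un_le[of "cell_edges c \<inter> cell_edges b" "cell_edges c \<inter> cell_edges d"] by simp
      moreover have "card (cell_edges c - cell_edges a) \<le> card ((cell_edges c \<inter> cell_edges b) \<union> (cell_edges c \<inter> cell_edges d))"
        using card_mono[OF _ sub] cells_fin by blast
      ultimately show False using c1 by simp
    qed
  qed
  hence "sd (cell_edges b) (cell_edges a) = sd (cell_edges b) (cell_edges d)" using eq sd_comm by metis
  hence "cell_edges a = cell_edges d" by (rule sd_cancel)
  hence "d = a" using cells_sub_eq ca cd by blast
  thus ?thesis using c_b by simp
qed

lemma square:
  assumes "is_cell a" "is_cell b" "is_cell c3" "is_cell c4" "a \<noteq> b"
    and A: "sd M A = cell_edges a" and B: "sd M B = cell_edges b"
    and AN: "sd A N = cell_edges c3" and BN: "sd B N = cell_edges c4" and NM: "N \<noteq> M"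
  shows "c3 = b"
proof -
  have "sd M N = sd (cell_edges a) (cell_edges c3)" using sd_trans[of M A N] A AN by simp
  moreover have "sd M N = sd (cell_edges b) (cell_edges c4)" using sd_trans[of M B N] B BN by simp
  moreover have "sd M N \<noteq> {}" using NM sd_eq_empty by metis
  ultimately show ?thesis using face[OF assms(1-5)] by simp
qed

locale HC =
  fixes E :: "edge set" and W :: "edge set set" and n :: nat and \<phi> :: "edge set \<Rightarrow> bool list"
  assumes wf: "wfE E" and Wpm: "W \<subseteq> {M. perfect_matching E M}"
    and bij: "bij_betw \<phi> W {xs. length xs = n}"
    and edg: "\<forall>u\<in>W. \<forall>v\<in>W. {u,v} \<in> snd (induced_subgraph (resonance_graph E) W) \<longleftrightarrow> {\<phi> u, \<phi> v} \<in> snd (hypercube n)"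
begin

definition psi :: "bool list \<Rightarrow> edge set" where "psi xs = inv_into W \<phi> xs"

lemma img: "\<phi> ` W = {xs. length xs = n}" using bij_betw_imp_surj_on[OF bij] .

lemma psi_W: "length xs = n \<Longrightarrow> psi xs \<in> W"
proof -
  assume "length xs = n" hence "xs \<in> \<phi> ` W" using img by simp
  thus "psi xs \<in> W" unfolding psi_def by (rule inv_into_into)
qed

lemma phi_psi: "length xs = n \<Longrightarrow> \<phi> (psi xs) = xs"
proof -
  assume "length xs = n" hence "xs \<in> \<phi> ` W" using img by simp
  thus "\<phi> (psi xs) = xs" unfolding psi_def by (rule f_inv_into_f)
qed

lemma psi_phi: "w \<in> W \<Longrightarrow> psi (\<phi> w) = w"
  unfolding psi_def by (rule bij_betw_inv_into_left[OF bij])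

lemma phi_len: "w \<in> W \<Longrightarrow> length (\<phi> w) = n" using img by auto

lemma W_pm: "w \<in> W \<Longrightarrow> perfect_matching E w" using Wpm by blast

lemma adjW:
  assumes "length xs = n" "length ys = n"
  shows "(\<exists>c\<in>hexes E. sd (psi xs) (psi ys) = cell_edges c) \<longleftrightarrow> card {i. i < n \<and> xs!i \<noteq> ys!i} = 1"
proof -
  have u: "psi xs \<in> W" and v: "psi ys \<in> W" using psi_W assms by auto
  have "(\<exists>c\<in>hexes E. sd (psi xs) (psi ys) = cell_edges c) \<longleftrightarrow> {psi xs, psi ys} \<in> snd (resonance_graph E)"
    using res_edge W_pm u v by blast
  also have "\<dots> \<longleftrightarrow> {psi xs, psi ys} \<in> snd (induced_subgraph (resonance_graph E) W)"
    using induced_edge[OF u v] by simp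
  also have "\<dots> \<longleftrightarrow> {xs, ys} \<in> snd (hypercube n)" using edg u v phi_psi assms by simp
  also have "\<dots> \<longleftrightarrow> card {i. i < n \<and> xs!i \<noteq> ys!i} = 1" using hyp_edge assms by simp
  finally show ?thesis .
qed

definition vec :: "nat set \<Rightarrow> bool list" where "vec S = map (\<lambda>i. i \<in> S) [0..<n]"

lemma len_vec: "length (vec S) = n" unfolding vec_def by simp
lemma vec_nth: "i < n \<Longrightarrow> vec S ! i = (i \<in> S)" unfolding vec_def by simp

lemma ham: "S \<subseteq> {..<n} \<Longrightarrow> T \<subseteq> {..<n} \<Longrightarrow> {i. i < n \<and> vec S ! i \<noteq> vec T ! i} = sd S T"
  unfolding sd_def using vec_nth by auto

definition Mx :: "nat set \<Rightarrow> edge set" where "Mx S = psi (vec S)"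

lemma Mx_W: "Mx S \<in> W" unfolding Mx_def using psi_W len_vec by blast
lemma Mx_pm: "perfect_matching E (Mx S)" using Mx_W W_pm by blast

lemma Mx_inj:
  assumes "S \<subseteq> {..<n}" "T \<subseteq> {..<n}" "Mx S = Mx T" shows "S = T"
proof -
  have "vec S = vec T" using assms(3) phi_psi len_vec unfolding Mx_def by metis
  hence "\<And>i. i < n \<Longrightarrow> (i \<in> S) = (i \<in> T)" using vec_nth by metis
  thus ?thesis using assms(1,2) by blast
qed

lemma Mx_adj:
  assumes "S \<subseteq> {..<n}" "T \<subseteq> {..<n}" "card (sd S T) = 1"
  shows "\<exists>c\<in>hexes E. sd (Mx S) (Mx T) = cell_edges c"
  using adjW[OF len_vec len_vec, of S T] ham[OF assms(1,2)] assms(3) unfolding Mx_def by simp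

definition M0 :: "edge set" where "M0 = Mx {}"

definition h :: "nat \<Rightarrow> vert" where
  "h i = (SOME c. c \<in> hexes E \<and> sd M0 (Mx {i}) = cell_edges c)"

lemma h_spec: assumes "i < n" shows "h i \<in> hexes E" "sd M0 (Mx {i}) = cell_edges (h i)"
proof -
  have "sd {} {i} = {i}" unfolding sd_def by blast
  hence "\<exists>c\<in>hexes E. sd M0 (Mx {i}) = cell_edges c" unfolding M0_def using Mx_adj[of "{}" "{i}"] assms by simp
  hence "h i \<in> hexes E \<and> sd M0 (Mx {i}) = cell_edges (h i)" unfolding h_def by (rule someI_ex[OF bexE]) blast
  thus "h i \<in> hexes E" "sd M0 (Mx {i}) = cell_edges (h i)" by auto
qed

lemma h_cell: "i < n \<Longrightarrow> is_cell (h i)" using h_spec hexes_cell by blast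

lemma M0_alt: "i < n \<Longrightarrow> alternating M0 (h i)"
  using diff_alt[OF Mx_pm[of "{}"] Mx_pm[of "{i}"]] h_spec unfolding M0_def by blast

lemma step1:
  assumes i: "i < n" and j: "j < n" and ij: "i \<noteq> j"
  shows "h i \<noteq> h j \<and> hv (h i) \<inter> hv (h j) = {}"
proof -
  let ?A = "Mx {i}" and ?B = "Mx {j}" and ?N = "Mx {i,j}"
  have sA: "sd M0 ?A = cell_edges (h i)" and sB: "sd M0 ?B = cell_edges (h j)" using h_spec i j by auto
  have "sd {i} {i,j} = {j}" "sd {j} {i,j} = {i}" using ij unfolding sd_def by auto
  then obtain c3 c4 where c3: "c3 \<in> hexes E" "sd ?A ?N = cell_edges c3"
      and c4: "c4 \<in> hexes E" "sd ?B ?N = cell_edges c4"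
    using Mx_adj[of "{i}" "{i,j}"] Mx_adj[of "{j}" "{i,j}"] i j by fastforce
  have hij: "h i \<noteq> h j"
  proof
    assume "h i = h j"
    hence "?A = ?B" using sA sB sd_cancel by metis
    hence "{i} = {j}" using Mx_inj i j by blast
    thus False using ij by simp
  qed
  have "?N \<noteq> M0"
  proof
    assume "?N = M0"
    hence "{i,j} = {}" using Mx_inj[of "{i,j}" "{}"] i j unfolding M0_def by blast
    thus False by simp
  qed
  hence "c3 = h j" using square[OF h_cell[OF i] h_cell[OF j] hexes_cell[OF c3(1)] hexes_cell[OF c4(1)] hij sA sB c3(2) c4(2)]
    by simp
  hence sAN: "sd ?A ?N = cell_edges (h j)" using c3 by simp
  have altM0: "alternating M0 (h i)" "alternating M0 (h j)" using M0_alt i j by auto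
  have altAi: "alternating ?A (h i)"
    using diff_alt[OF Mx_pm Mx_pm[of "{}"] h_spec(1)[OF i]] sA sd_comm unfolding M0_def by metis
  have altAj: "alternating ?A (h j)"
    using diff_alt[OF Mx_pm Mx_pm h_spec(1)[OF j] sAN] .
  have "hv (h i) \<inter> hv (h j) = {}"
  proof (rule ccontr)
    assume "hv (h i) \<inter> hv (h j) \<noteq> {}"
    then obtain u where u: "u \<in> hv (h i)" "u \<in> hv (h j)" by blast
    have uE: "u \<in> verts E" using hv_verts h_spec(1)[OF i] u(1) by blast
    have pm0: "perfect_matching E M0" unfolding M0_def by (rule Mx_pm)
    obtain m where m: "m \<in> M0" "u \<in> m" using pm_ex[OF pm0 uE] by blast
    have mi: "m \<in> cell_edges (h i)" using alt_vert[OF pm0 altM0(1) h_spec(1)[OF i] u(1) m] .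
    have mj: "m \<in> cell_edges (h j)" using alt_vert[OF pm0 altM0(2) h_spec(1)[OF j] u(2) m] .
    obtain m' where m': "m' \<in> ?A" "u \<in> m'" using pm_ex[OF Mx_pm uE] by blast
    have m'i: "m' \<in> cell_edges (h i)" using alt_vert[OF Mx_pm altAi h_spec(1)[OF i] u(1) m'] .
    have m'j: "m' \<in> cell_edges (h j)" using alt_vert[OF Mx_pm altAj h_spec(1)[OF j] u(2) m'] .
    have "?A = sd M0 (cell_edges (h i))" using sA sd_inv by metis
    hence "m \<notin> ?A" using m mi unfolding sd_def by blast
    hence "m \<noteq> m'" using m' by blast
    hence "h i = h j" using share2[OF h_cell[OF i] h_cell[OF j] mi mj m'i m'j] by blast
    thus False using hij by simp
  qed
  thus ?thesis using hij by simp
qed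

definition U' :: "nat set \<Rightarrow> edge set" where "U' S = (\<Union>i\<in>S. cell_edges (h i))"

lemma disjU:
  assumes "i < n" "T \<subseteq> {..<n}" "i \<notin> T"
  shows "cell_edges (h i) \<inter> U' T = {}"
proof (rule ccontr)
  assume "cell_edges (h i) \<inter> U' T \<noteq> {}"
  then obtain e k where e: "e \<in> cell_edges (h i)" "k \<in> T" "e \<in> cell_edges (h k)" unfolding U'_def by blast
  obtain u where u: "u \<in> e" using ce_ne[OF e(1)] by blast
  have "k < n" "k \<noteq> i" using e(2) assms by auto
  hence "hv (h i) \<inter> hv (h k) = {}" using step1 assms(1) by blast
  moreover have "u \<in> hv (h i)" "u \<in> hv (h k)" using u e ce_sub_hv by blast+
  ultimately show False by blast
qed

lemma U'_ins:
  assumes "i < n" "T \<subseteq> {..<n}" "i \<notin> T"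
  shows "U' (insert i T) = sd (U' T) (cell_edges (h i))"
proof -
  have "U' (insert i T) = U' T \<union> cell_edges (h i)" unfolding U'_def by blast
  thus ?thesis using sd_disj[of "U' T" "cell_edges (h i)"] disjU[OF assms] by blast
qed

lemma step2: "S \<subseteq> {..<n} \<Longrightarrow> Mx S = sd M0 (U' S)"
proof (induction "card S" arbitrary: S rule: less_induct)
  case less
  have fin: "finite S" using less.prems finite_subset by blast
  show ?case
  proof (cases "card S \<le> 1")
    case True
    hence "card S = 0 \<or> card S = 1" by arith
    thus ?thesis
    proof
      assume "card S = 0"
      hence "S = {}" using fin by simp
      thus ?thesis unfolding M0_def U'_def by (simp add: sd_empty)
    next
      assume "card S = 1"
      then obtain i where S: "S = {i}" by (rule card_1_singletonE)
      hence i: "i < n" using less.prems by blast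
      have "U' S = cell_edges (h i)" unfolding U'_def S by simp
      thus ?thesis using h_spec(2)[OF i] sd_inv S by metis
    qed
  next
    case False
    then obtain i where i: "i \<in> S" using fin by fastforce
    have "card (S - {i}) \<ge> 1" using False i fin by simp
    hence "S - {i} \<noteq> {}" by (metis card.empty not_one_le_zero)
    then obtain j where j: "j \<in> S - {i}" by blast
    hence ij: "i \<noteq> j" "j \<in> S" by auto
    let ?S0 = "S - {i} - {j}" and ?S1 = "S - {i}" and ?S2 = "S - {j}"
    have in_n: "i < n" "j < n" using i ij less.prems by auto
    have subs: "?S0 \<subseteq> {..<n}" "?S1 \<subseteq> {..<n}" "?S2 \<subseteq> {..<n}" using less.prems by auto
    have cards: "card ?S0 < card S" "card ?S1 < card S" "card ?S2 < card S"
    proof -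
      have cpos: "card S > 0" using fin i card_gt_0_iff by blast
      show "card ?S0 < card S" "card ?S1 < card S" "card ?S2 < card S" using fin i ij cpos by auto
    qed
    have IH0: "Mx ?S0 = sd M0 (U' ?S0)" using less.hyps[OF cards(1) subs(1)] .
    have IH1: "Mx ?S1 = sd M0 (U' ?S1)" using less.hyps[OF cards(2) subs(2)] .
    have IH2: "Mx ?S2 = sd M0 (U' ?S2)" using less.hyps[OF cards(3) subs(3)] .
    have e1: "?S1 = insert j ?S0" using ij by blast
    have e2: "?S2 = insert i ?S0" using ij i by blast
    have A: "Mx ?S1 = sd (Mx ?S0) (cell_edges (h j))"
      using IH1 IH0 U'_ins[OF in_n(2) subs(1)] e1 by (simp add: sd_assoc)
    have B: "Mx ?S2 = sd (Mx ?S0) (cell_edges (h i))"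
      using IH2 IH0 U'_ins[OF in_n(1) subs(1)] e2 by (simp add: sd_assoc)
    have sA: "sd (Mx ?S0) (Mx ?S1) = cell_edges (h j)" using A by (simp add: sd_inv)
    have sB: "sd (Mx ?S0) (Mx ?S2) = cell_edges (h i)" using B by (simp add: sd_inv)
    have "sd ?S1 S = {i}" "sd ?S2 S = {j}" using i ij unfolding sd_def by auto
    then obtain c3 c4 where c3: "c3 \<in> hexes E" "sd (Mx ?S1) (Mx S) = cell_edges c3"
      and c4: "c4 \<in> hexes E" "sd (Mx ?S2) (Mx S) = cell_edges c4"
      using Mx_adj[OF subs(2) less.prems] Mx_adj[OF subs(3) less.prems] by fastforce
    have NM: "Mx S \<noteq> Mx ?S0"
    proof
      assume "Mx S = Mx ?S0"
      hence "S = ?S0" using Mx_inj less.prems subs(1) by blast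
      thus False using i by blast
    qed
    have hji: "h j \<noteq> h i" using step1[OF in_n(2) in_n(1)] ij by auto
    have "c3 = h i" using square[OF h_cell[OF in_n(2)] h_cell[OF in_n(1)] hexes_cell[OF c3(1)]
        hexes_cell[OF c4(1)] hji sA sB c3(2) c4(2) NM] .
    hence "Mx S = sd (Mx ?S1) (cell_edges (h i))" using c3(2) sd_inv by metis
    also have "\<dots> = sd M0 (sd (U' ?S1) (cell_edges (h i)))" using IH1 by (simp add: sd_assoc)
    also have "sd (U' ?S1) (cell_edges (h i)) = U' S"
      using U'_ins[OF in_n(1) subs(2)] i by (simp add: insert_absorb)
    finally show ?thesis .
  qed
qed

lemma sd_step:
  assumes "T \<subseteq> {..<n}" "i < n" "i \<notin> T"
  shows "sd (Mx T) (Mx (insert i T)) = cell_edges (h i)"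
proof -
  have "Mx (insert i T) = sd M0 (U' (insert i T))" using step2 assms by simp
  also have "\<dots> = sd (Mx T) (cell_edges (h i))" using U'_ins[OF assms(2,1,3)] step2[OF assms(1)] by (simp add: sd_assoc)
  finally show ?thesis by (simp add: sd_inv)
qed

definition HS :: "vert set" where "HS = h ` {..<n}"
definition EC :: "edge set" where "EC = M0 - U' {..<n}"

lemma h_inj: "inj_on h {..<n}"
  unfolding inj_on_def using step1 by blast

lemma M0_pm: "perfect_matching E M0" unfolding M0_def by (rule Mx_pm)

lemma pdHC: "pdata E HS EC"
  unfolding pdata_def
proof (intro conjI)
  show "finite HS" unfolding HS_def by simp
  show "HS \<subseteq> hexes E" unfolding HS_def using h_spec by blast
  show "\<forall>c\<in>HS. \<forall>d\<in>HS. c \<noteq> d \<longrightarrow> hv c \<inter> hv d = {}" unfolding HS_def using step1 by blast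
  show "EC \<subseteq> E" unfolding EC_def using M0_pm unfolding perfect_matching_def by blast
  show "\<forall>e\<in>EC. \<forall>e'\<in>EC. e \<noteq> e' \<longrightarrow> e \<inter> e' = {}"
  proof (intro ballI impI)
    fix e e' assume e: "e \<in> EC" "e' \<in> EC" "e \<noteq> e'"
    show "e \<inter> e' = {}"
    proof (rule ccontr)
      assume "e \<inter> e' \<noteq> {}"
      then obtain u where "u \<in> e" "u \<in> e'" by blast
      hence "e = e'" using pm_unique[OF M0_pm] e unfolding EC_def by blast
      thus False using e by simp
    qed
  qed
  show "\<forall>e\<in>EC. \<forall>c\<in>HS. e \<inter> hv c = {}"
  proof (intro ballI)
    fix e c assume e: "e \<in> EC" and c: "c \<in> HS"
    then obtain i where i: "i < n" "c = h i" unfolding HS_def by blast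
    show "e \<inter> hv c = {}"
    proof (rule ccontr)
      assume "e \<inter> hv c \<noteq> {}"
      then obtain u where u: "u \<in> e" "u \<in> hv c" by blast
      have "e \<in> cell_edges (h i)" using alt_vert[OF M0_pm M0_alt[OF i(1)] h_spec(1)[OF i(1)]] u i e
        unfolding EC_def by blast
      thus False using e i unfolding EC_def U'_def by blast
    qed
  qed
  show "verts E \<subseteq> \<Union>(hv ` HS) \<union> \<Union>EC"
  proof
    fix v assume v: "v \<in> verts E"
    obtain e where e: "e \<in> M0" "v \<in> e" using pm_ex[OF M0_pm v] by blast
    show "v \<in> \<Union>(hv ` HS) \<union> \<Union>EC"
    proof (cases "e \<in> U' {..<n}")
      case True
      then obtain i where "i < n" "e \<in> cell_edges (h i)" unfolding U'_def by blast
      hence "v \<in> hv (h i)" "h i \<in> HS" using ce_sub_hv e(2) unfolding HS_def by blast+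
      thus ?thesis by blast
    next
      case False thus ?thesis using e unfolding EC_def by blast
    qed
  qed
qed

lemma W_eq: "W = PP E HS EC"
proof -
  have pd: "PD E HS EC" unfolding PD_def using wf pdHC by simp
  have sub: "W \<subseteq> PP E HS EC"
  proof
    fix w assume w: "w \<in> W"
    let ?xs = "\<phi> w"
    define S where "S = {i. i < n \<and> ?xs ! i}"
    have Sn: "S \<subseteq> {..<n}" unfolding S_def by blast
    have "vec S = ?xs"
      by (rule nth_equalityI) (auto simp: len_vec phi_len[OF w] vec_nth S_def)
    hence wS: "w = Mx S" unfolding Mx_def using psi_phi[OF w] by simp
    show "w \<in> PP E HS EC"
      unfolding PP_def
    proof (intro CollectI conjI ballI)
      show "perfect_matching E w" using W_pm[OF w] .
      fix c assume "c \<in> HS"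
      then obtain i where i: "i < n" "c = h i" unfolding HS_def by blast
      show "alternating w c"
      proof (cases "i \<in> S")
        case True
        have "sd (Mx (S - {i})) (Mx (insert i (S - {i}))) = cell_edges (h i)"
          using sd_step[of "S - {i}" i] Sn i by blast
        hence "sd (Mx S) (Mx (S - {i})) = cell_edges (h i)" using True sd_comm by (metis insert_Diff)
        thus ?thesis using diff_alt[OF Mx_pm Mx_pm h_spec(1)[OF i(1)]] wS i by simp
      next
        case False
        have "sd (Mx S) (Mx (insert i S)) = cell_edges (h i)" using sd_step[OF Sn i(1) False] .
        thus ?thesis using diff_alt[OF Mx_pm Mx_pm h_spec(1)[OF i(1)]] wS i by simp
      qed
    next
      fix e assume e: "e \<in> EC"
      have "U' S \<subseteq> U' {..<n}" using Sn unfolding U'_def by blast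
      hence "e \<notin> U' S" "e \<in> M0" using e unfolding EC_def by blast+
      thus "e \<in> w" using wS step2[OF Sn] unfolding sd_def by blast
    qed
  qed
  have "card W = 2^n" using bij_betw_same_card[OF bij] card_bool_lists by simp
  moreover have "card HS = n" unfolding HS_def using card_image[OF h_inj] by simp
  hence "card (PP E HS EC) = 2^n" using PD.PP_card[OF pd] by simp
  moreover have "finite (PP E HS EC)" using PD.PP_card[OF pd] by simp
  ultimately show ?thesis using card_subset_eq[OF _ sub] by simp
qed

lemma surj_ex: "\<exists>HS EC. pdata E HS EC \<and> W = PP E HS EC"
  using pdHC W_eq by blast

end




lemma fC_eq: "fC E F = induced_subgraph (resonance_graph E) (PP E (hex_comps E F) (edge_comps E F))"
  unfolding fC_def PP_def ..

lemma fst_R: "fst (resonance_graph E) = {M. perfect_matching E M}"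
  unfolding resonance_graph_def by simp

theorem theorem2:
  assumes "hexagonal_system E" and "kekulean E"
  shows "bij_betw (fC E) {F. clar_cover E F} (hypercube_subgraphs E) \<and>
         (\<forall>F\<in>{F. clar_cover E F}. \<forall>F'\<in>{F. clar_cover E F}.
            clar_le E F F' \<longleftrightarrow> subgraph (fC E F) (fC E F'))"
proof
  have wf: "wfE E" using assms(1) unfolding hexagonal_system_def wfE_def by blast
  have PDF: "\<And>F. clar_cover E F \<Longrightarrow> PD E (hex_comps E F) (edge_comps E F)"
    using clar_cover_pd[OF wf] wf unfolding PD_def by blast
  show "bij_betw (fC E) {F. clar_cover E F} (hypercube_subgraphs E)"
    unfolding bij_betw_def
  proof
    show "inj_on (fC E) {F. clar_cover E F}"
    proof (rule inj_onI)
      fix F F' assume F: "F \<in> {F. clar_cover E F}" and F': "F' \<in> {F. clar_cover E F}"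
        and eq: "fC E F = fC E F'"
      have "fst (fC E F) = fst (fC E F')" using eq by simp
      hence "PP E (hex_comps E F) (edge_comps E F) = PP E (hex_comps E F') (edge_comps E F')"
        unfolding fC_eq induced_subgraph_def by simp
      hence "\<Union>(PP E (hex_comps E F) (edge_comps E F)) = \<Union>(PP E (hex_comps E F') (edge_comps E F'))"
        by simp
      moreover have "\<Union>(PP E (hex_comps E F) (edge_comps E F)) = edge_comps E F \<union> U (hex_comps E F)"
        using PD.PP_union[OF PDF] F by simp
      moreover have "\<Union>(PP E (hex_comps E F') (edge_comps E F')) = edge_comps E F' \<union> U (hex_comps E F')"
        using PD.PP_union[OF PDF] F' by simp
      moreover have "F = edge_comps E F \<union> U (hex_comps E F)" using clar_cover_pd[OF wf] F by simp
      moreover have "F' = edge_comps E F' \<union> U (hex_comps E F')" using clar_cover_pd[OF wf] F' by simp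
      ultimately show "F = F'" by simp
    qed
    show "fC E ` {F. clar_cover E F} = hypercube_subgraphs E"
    proof
      show "fC E ` {F. clar_cover E F} \<subseteq> hypercube_subgraphs E"
      proof
        fix G assume "G \<in> fC E ` {F. clar_cover E F}"
        then obtain F where F: "clar_cover E F" "G = fC E F" by blast
        have pd: "PD E (hex_comps E F) (edge_comps E F)" using PDF[OF F(1)] .
        have "PP E (hex_comps E F) (edge_comps E F) \<subseteq> fst (resonance_graph E)"
          unfolding fst_R PP_def by blast
        moreover have "graph_iso G (hypercube (card (hex_comps E F)))"
          using PD.PP_iso[OF pd] F(2) fC_eq by simp
        ultimately show "G \<in> hypercube_subgraphs E"
          unfolding hypercube_subgraphs_def using F(2) fC_eq by blast
      qed
      show "hypercube_subgraphs E \<subseteq> fC E ` {F. clar_cover E F}"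
      proof
        fix G assume "G \<in> hypercube_subgraphs E"
        then obtain W n where W: "W \<subseteq> fst (resonance_graph E)" "G = induced_subgraph (resonance_graph E) W"
          and iso: "graph_iso G (hypercube n)" unfolding hypercube_subgraphs_def by blast
        obtain \<phi> where \<phi>: "bij_betw \<phi> (fst G) (fst (hypercube n))"
          "\<forall>u\<in>fst G. \<forall>v\<in>fst G. {u,v} \<in> snd G \<longleftrightarrow> {\<phi> u, \<phi> v} \<in> snd (hypercube n)"
          using iso unfolding graph_iso_def by blast
        have fG: "fst G = W" using W(2) unfolding induced_subgraph_def by simp
        have hc: "HC E W n \<phi>" unfolding HC_def
          using wf W(1) fst_R \<phi> fG W(2) unfolding hypercube_def by auto
        obtain HS EC where pd: "pdata E HS EC" and WP: "W = PP E HS EC"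
          using HC.surj_ex[OF hc] by blast
        have pd': "PD E HS EC" unfolding PD_def using wf pd by simp
        let ?F = "EC \<union> U HS"
        have "clar_cover E ?F" "hex_comps E ?F = HS" "edge_comps E ?F = EC"
          using PD.lemG[OF pd'] by auto
        hence "fC E ?F = G" using fC_eq W(2) WP by simp
        thus "G \<in> fC E ` {F. clar_cover E F}" using \<open>clar_cover E ?F\<close> by blast
      qed
    qed
  qed
  show "\<forall>F\<in>{F. clar_cover E F}. \<forall>F'\<in>{F. clar_cover E F}.
            clar_le E F F' \<longleftrightarrow> subgraph (fC E F) (fC E F')"
    unfolding clar_le_def by blast
qed



end
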